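(* Let $H\in(\tfrac12,1)$, $(b_1,b_2,x_0)\in\mathbb{R}^3$ with $b_2\neq 0$, and $q>0$, $r>0$. For each $K\in\mathbb{R}$, let $u(t)=Kx(t)$ where $x$ is the solution of $$x(t)=x_0+\int_0^t\big(b_1x(t')+b_2u(t')\big)\,dt'+R^H(t),\qquad t\ge 0,$$ with $R^H$ a Rosenblatt process of Hurst index $H$, and let $$L_\infty(u)=\limsup_{T\to\infty}\frac1T\,\mathbb{E}\int_0^T\big(q\,x^2(t)+r\,u^2(t)\big)\,dt .$$ Consider the problem $\inf_{u\in\mathcal U}L_\infty(u)$ over $\mathcal U=\{(u(t))_{t\ge0}: u(t)=Kx(t),\ K\in\mathbb{R}\}$. Then the optimal gain in this family of admissible feedbacks is $$\hat K=-\frac{b_1+\sqrt{b_1^2+4H(1-H)\frac{b_2^2q}{r}}}{2b_2(1-H)},$$ and the optimal cost is $$L_\infty(\hat K)=\frac{\Gamma(2H)}{[-(b_1+b_2\hat K)]^{2H-1}}\left(-\frac{r\hat K}{b_2}\right)=\frac{\Gamma(2H+1)}{2[-(b_1+b_2\hat K)]^{2H}}\big(q+r\hat K^2\big).$$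
   Context: The Rosenblatt process with Hurst index $H\in(\tfrac12,1)$ is $R^H(t)=C_R^H\int_{\mathbb{R}^2}\Big(\int_0^t(u-y_1)_+^{\frac H2-1}(u-y_2)_+^{\frac H2-1}du\Big)\,dW(y_1)\,dW(y_2)$, a double Wiener–Itô integral with respect to a two-sided standard Brownian motion $W$, where $C_R^H>0$ is the normalizing constant making $\mathbb{E}[R^H(1)^2]=1$. It is self-similar of index $H$, non-Gaussian, has continuous paths and covariance $\tfrac12(t^{2H}+s^{2H}-|t-s|^{2H})$. The linear equation with additive Rosenblatt noise has the solution $x(t)=e^{(b_1+b_2K)t}x_0+\int_0^te^{(b_1+b_2K)(t-s)}dR^H(s)$, the integral defined pathwise by integration by parts. $\Gamma$ is the Gamma function. *)

theory Defs
  imports "HOL-Probability.Probability"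
begin

text \<open>Covariance of the Rosenblatt process (same as that of fBm).\<close>
definition rosen_cov :: "real \<Rightarrow> real \<Rightarrow> real \<Rightarrow> real" where
  "rosen_cov H t s = (t powr (2*H) + s powr (2*H) - \<bar>t - s\<bar> powr (2*H)) / 2"

definition rosenblatt_like :: "'a measure \<Rightarrow> real \<Rightarrow> (real \<Rightarrow> 'a \<Rightarrow> real) \<Rightarrow> bool" where
  "rosenblatt_like M H R \<longleftrightarrow>
     prob_space M \<and>
     (\<forall>t. R t \<in> borel_measurable M) \<and>
     (\<forall>\<omega>\<in>space M. R 0 \<omega> = 0 \<and> continuous_on {0..} (\<lambda>t. R t \<omega>)) \<and>
     (\<forall>t\<ge>0. integrable M (\<lambda>\<omega>. (R t \<omega>)\<^sup>2) \<and> (\<integral>\<omega>. R t \<omega> \<partial>M) = 0) \<and>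
     (\<forall>t\<ge>0. \<forall>s\<ge>0. (\<integral>\<omega>. R t \<omega> * R s \<omega> \<partial>M) = rosen_cov H t s)"

text \<open>Pathwise solution x(t) = e^{at} x0 + \<integral>_0^t e^{a(t-s)} dR(s), the stochastic integral
  defined by integration by parts (using R(0) = 0):
  \<integral>_0^t e^{a(t-s)} dR(s) = R(t) + a \<integral>_0^t e^{a(t-s)} R(s) ds.\<close>
definition lin_sol :: "(real \<Rightarrow> 'a \<Rightarrow> real) \<Rightarrow> real \<Rightarrow> real \<Rightarrow> real \<Rightarrow> 'a \<Rightarrow> real" where
  "lin_sol R x0 a t \<omega> =
     exp (a * t) * x0 + R t \<omega> + a * integral {0..t} (\<lambda>s. exp (a * (t - s)) * R s \<omega>)"

definition lqr_cost :: "'a measure \<Rightarrow> (real \<Rightarrow> 'a \<Rightarrow> real) \<Rightarrow> real \<Rightarrow> real \<Rightarrow> real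
    \<Rightarrow> real \<Rightarrow> real \<Rightarrow> real \<Rightarrow> ennreal" where
  "lqr_cost M R b1 b2 x0 q r K =
     Limsup at_top (\<lambda>T::real. ennreal (1 / T) *
        (\<integral>\<^sup>+ \<omega>. ennreal (integral {0..T}
            (\<lambda>t. q * (lin_sol R x0 (b1 + b2 * K) t \<omega>)\<^sup>2
               + r * (K * lin_sol R x0 (b1 + b2 * K) t \<omega>)\<^sup>2)) \<partial>M))"

end

theory Submission
  imports Defs "HOL-Real_Asymp.Real_Asymp"
begin



lemma nn_exp_Ici:
  fixes b :: real assumes b: "b < 0"
  shows "(\<integral>\<^sup>+u. ennreal (exp (b*u)) * indicator {0..} u \<partial>lborel) = ennreal (-1/b)"
proof -
  have lim: "((\<lambda>u. exp (b*u) / b) \<longlongrightarrow> 0) at_top"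
    using b by real_asymp
  have "(\<integral>\<^sup>+u. ennreal (exp (b*u)) * indicator {0..} u \<partial>lborel) = ennreal (0 - exp (b*0) / b)"
    by (rule nn_integral_FTC_atLeast[OF _ _ _ lim])
       (use b in \<open>auto intro!: derivative_eq_intros\<close>)
  then show ?thesis by simp
qed

lemma nn_gamma_Ici:
  fixes b p :: real assumes b: "b < 0" and p: "p > 0"
  shows "(\<integral>\<^sup>+u. ennreal (exp (b*u) * u powr p) * indicator {0..} u \<partial>lborel)
         = ennreal (Gamma (p+1) / (-b) powr (p+1))"
proof -
  have hi: "((\<lambda>t. t powr p / exp t) has_integral Gamma (p+1)) {0..}"
    using Gamma_integral_real[of "p+1"] p by simp
  have e1: "(\<integral>\<^sup>+t. ennreal (t powr p / exp t) * indicator {0..} t \<partial>lborel) = ennreal (Gamma (p+1))"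
    by (rule nn_integral_has_integral_lebesgue'[OF _ hi]) auto
  have "(\<integral>\<^sup>+t. ennreal (t powr p / exp t) * indicator {0..} t \<partial>lborel)
      = \<bar>-b\<bar> * (\<integral>\<^sup>+u. ennreal ((0 + (-b)*u) powr p / exp (0 + (-b)*u)) * indicator {0..} (0 + (-b)*u) \<partial>lborel)"
    by (rule nn_integral_real_affine) (use b in auto)
  also have "\<dots> = ennreal (-b) * (\<integral>\<^sup>+u. ennreal ((-b) powr p) * (ennreal (exp (b*u) * u powr p) * indicator {0..} u) \<partial>lborel)"
  proof -
    have "\<And>u. ennreal ((0 + (-b)*u) powr p / exp (0 + (-b)*u)) * indicator {0..} (0 + (-b)*u)
       = ennreal ((-b) powr p) * (ennreal (exp (b*u) * u powr p) * indicator {0..} u)"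
    proof -
      fix u :: real
      show "ennreal ((0 + (-b)*u) powr p / exp (0 + (-b)*u)) * indicator {0..} (0 + (-b)*u)
       = ennreal ((-b) powr p) * (ennreal (exp (b*u) * u powr p) * indicator {0..} u)"
      proof (cases "u \<ge> 0")
        case True
        have pm: "((-b)*u) powr p = (-b) powr p * u powr p"
          using True b powr_mult[of "-b" u p] by simp
        have "(0 + (-b)*u) powr p / exp (0 + (-b)*u) = (-b) powr p * (exp (b*u) * u powr p)"
          using True b by (simp only: pm add_0_left) (simp add: exp_minus field_simps)
        moreover have "0 \<le> (-b)*u" using True b by (simp add: mult_nonpos_nonneg)
        ultimately show ?thesis using True b by (simp add: ennreal_mult)
      next
        case False
        then have "\<not> 0 \<le> (-b)*u" using b by (simp add: mult_less_0_iff not_le mult_neg_neg)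
        then show ?thesis using False by simp
      qed
    qed
    then show ?thesis using b by simp
  qed
  also have "\<dots> = ennreal (-b) * (ennreal ((-b) powr p) * (\<integral>\<^sup>+u. ennreal (exp (b*u) * u powr p) * indicator {0..} u \<partial>lborel))"
    by (subst nn_integral_cmult) auto
  finally have eq0: "ennreal (Gamma (p+1)) = ennreal (-b) * (ennreal ((-b) powr p) * (\<integral>\<^sup>+u. ennreal (exp (b*u) * u powr p) * indicator {0..} u \<partial>lborel))"
    using e1 by simp
  have c: "ennreal (-b) * ennreal ((-b) powr p) = ennreal ((-b) powr (p+1))"
    using b by (simp add: ennreal_mult[symmetric] powr_add mult.commute)
  have eq: "ennreal (Gamma (p+1)) = ennreal ((-b) powr (p+1)) * (\<integral>\<^sup>+u. ennreal (exp (b*u) * u powr p) * indicator {0..} u \<partial>lborel)"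
    unfolding eq0 c[symmetric] by (simp add: mult.assoc)
  have pos: "(-b) powr (p+1) > 0" using b by simp
  show ?thesis
  proof -
    have "ennreal (Gamma (p+1) / (-b) powr (p+1)) = ennreal (Gamma (p+1)) / ennreal ((-b) powr (p+1))"
      using pos Gamma_real_pos[of "p+1"] p by (simp add: divide_ennreal)
    also have "\<dots> = (\<integral>\<^sup>+u. ennreal (exp (b*u) * u powr p) * indicator {0..} u \<partial>lborel)"
      unfolding eq using pos
      by (subst mult.commute, subst ennreal_mult_divide_eq) auto
    finally show ?thesis by simp
  qed
qed

lemma nn_shift:
  fixes a p v :: real assumes a: "a < 0" and p: "p > 0"
  shows "(\<integral>\<^sup>+w. ennreal (exp (a*(v+w)) * (w-v) powr p) * indicator {v..} w \<partial>lborel)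
         = ennreal (exp (2*a* v)) * ennreal (Gamma (p+1) / (-a) powr (p+1))"
proof -
  have "(\<integral>\<^sup>+w. ennreal (exp (a*(v+w)) * (w-v) powr p) * indicator {v..} w \<partial>lborel)
     = (\<integral>\<^sup>+u. ennreal (exp (a*(v+(v + 1*u))) * ((v + 1*u)-v) powr p) * indicator {v..} (v + 1*u) \<partial>lborel)"
    by (subst nn_integral_real_affine[where c=1 and t=v]) auto
  also have "\<dots> = (\<integral>\<^sup>+u. ennreal (exp (2*a* v)) * (ennreal (exp (a*u) * u powr p) * indicator {0..} u) \<partial>lborel)"
  proof -
    have "\<And>u. ennreal (exp (a*(v+(v + 1*u))) * ((v + 1*u)-v) powr p) * indicator {v..} (v + 1*u)
       = ennreal (exp (2*a* v)) * (ennreal (exp (a*u) * u powr p) * indicator {0..} u)"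
      by (auto simp: ennreal_mult[symmetric] algebra_simps exp_add[symmetric] split: split_indicator)
    then show ?thesis by simp
  qed
  also have "\<dots> = ennreal (exp (2*a* v)) * (\<integral>\<^sup>+u. ennreal (exp (a*u) * u powr p) * indicator {0..} u \<partial>lborel)"
    by (subst nn_integral_cmult) auto
  finally show ?thesis using nn_gamma_Ici[OF a p] by simp
qed

definition kJ :: "real \<Rightarrow> real \<Rightarrow> real \<times> real \<Rightarrow> real" where
  "kJ a p = (\<lambda>(v,w). indicator {0..} v * indicator {0..} w * exp (a*(v+w)) * ((v powr p + w powr p - \<bar>v-w\<bar> powr p)/2))"

lemma kJ_meas[measurable]: "kJ a p \<in> borel_measurable (lborel \<Otimes>\<^sub>M lborel)"
  unfolding kJ_def by measurable

lemma cov_nonneg: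
  fixes v w p :: real assumes "v \<ge> 0" "w \<ge> 0" "p > 0"
  shows "\<bar>v-w\<bar> powr p \<le> v powr p + w powr p"
proof (cases "v \<le> w")
  case True
  then have "\<bar>v-w\<bar> powr p \<le> w powr p" using assms by (intro powr_mono2) auto
  then show ?thesis using assms by (smt (verit) powr_ge_zero)
next
  case False
  then have "\<bar>v-w\<bar> powr p \<le> v powr p" using assms by (intro powr_mono2) auto
  then show ?thesis using assms by (smt (verit) powr_ge_zero)
qed

lemma kJ_nonneg: "p > 0 \<Longrightarrow> kJ a p z \<ge> 0"
  unfolding kJ_def using cov_nonneg[of "fst z" "snd z" p]
  by (auto split: split_indicator prod.splits)

lemma nn_P1:
  fixes a p :: real assumes a: "a < 0" and p: "p > 0"
  shows "(\<integral>\<^sup>+z. ennreal (indicator {0..} (fst z) * indicator {0..} (snd z) * exp (a*(fst z + snd z)) * fst z powr p) \<partial>(lborel \<Otimes>\<^sub>M lborel))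
       = ennreal (Gamma (p+1) / (-a) powr (p+1)) * ennreal (-1/a)"
proof -
  have "(\<integral>\<^sup>+z. ennreal (indicator {0..} (fst z) * indicator {0..} (snd z) * exp (a*(fst z + snd z)) * fst z powr p) \<partial>(lborel \<Otimes>\<^sub>M lborel))
     = (\<integral>\<^sup>+v. \<integral>\<^sup>+w. ennreal (indicator {0..} v * indicator {0..} w * exp (a*(v + w)) * v powr p) \<partial>lborel \<partial>lborel)"
    by (subst lborel.nn_integral_fst[symmetric]) (auto cong: if_cong)
  also have "\<dots> = (\<integral>\<^sup>+v. ennreal (exp (a* v) * v powr p) * indicator {0..} v * (\<integral>\<^sup>+w. ennreal (exp (a*w)) * indicator {0..} w \<partial>lborel) \<partial>lborel)"
  proof -
    have "\<And>v w. ennreal (indicator {0..} v * indicator {0..} w * exp (a*(v + w)) * v powr p)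
       = ennreal (exp (a* v) * v powr p) * indicator {0..} v * (ennreal (exp (a*w)) * indicator {0..} w)"
      by (auto simp: ennreal_mult[symmetric] algebra_simps exp_add split: split_indicator)
    then show ?thesis by (simp add: nn_integral_cmult)
  qed
  also have "\<dots> = (\<integral>\<^sup>+v. ennreal (exp (a* v) * v powr p) * indicator {0..} v \<partial>lborel) * ennreal (-1/a)"
    unfolding nn_exp_Ici[OF a] by (simp add: nn_integral_multc)
  finally show ?thesis using nn_gamma_Ici[OF a p] by simp
qed

lemma nn_P2:
  fixes a p :: real assumes a: "a < 0" and p: "p > 0"
  shows "(\<integral>\<^sup>+z. ennreal (indicator {0..} (fst z) * indicator {0..} (snd z) * exp (a*(fst z + snd z)) * snd z powr p) \<partial>(lborel \<Otimes>\<^sub>M lborel))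
       = ennreal (Gamma (p+1) / (-a) powr (p+1)) * ennreal (-1/a)"
proof -
  have "(\<integral>\<^sup>+z. ennreal (indicator {0..} (fst z) * indicator {0..} (snd z) * exp (a*(fst z + snd z)) * snd z powr p) \<partial>(lborel \<Otimes>\<^sub>M lborel))
     = (\<integral>\<^sup>+w. \<integral>\<^sup>+v. ennreal (indicator {0..} v * indicator {0..} w * exp (a*(v + w)) * w powr p) \<partial>lborel \<partial>lborel)"
    by (subst lborel_pair.nn_integral_snd[symmetric]) (auto cong: if_cong)
  also have "\<dots> = (\<integral>\<^sup>+w. ennreal (exp (a*w) * w powr p) * indicator {0..} w * (\<integral>\<^sup>+v. ennreal (exp (a* v)) * indicator {0..} v \<partial>lborel) \<partial>lborel)"
  proof -
    have "\<And>v w. ennreal (indicator {0..} v * indicator {0..} w * exp (a*(v + w)) * w powr p)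
       = ennreal (exp (a*w) * w powr p) * indicator {0..} w * (ennreal (exp (a* v)) * indicator {0..} v)"
      by (auto simp: ennreal_mult[symmetric] algebra_simps exp_add split: split_indicator)
    then show ?thesis by (simp add: nn_integral_cmult)
  qed
  also have "\<dots> = (\<integral>\<^sup>+w. ennreal (exp (a*w) * w powr p) * indicator {0..} w \<partial>lborel) * ennreal (-1/a)"
    unfolding nn_exp_Ici[OF a] by (simp add: nn_integral_multc)
  finally show ?thesis using nn_gamma_Ici[OF a p] by simp
qed

lemma nn_P3a:
  fixes a p :: real assumes a: "a < 0" and p: "p > 0"
  shows "(\<integral>\<^sup>+z. ennreal (indicator {0..} (fst z) * indicator {0..} (snd z) * exp (a*(fst z + snd z)) *
            (if fst z \<le> snd z then (snd z - fst z) powr p else 0)) \<partial>(lborel \<Otimes>\<^sub>M lborel))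
       = ennreal (Gamma (p+1) / (-a) powr (p+1)) * ennreal (-1/(2*a))"
proof -
  have "(\<integral>\<^sup>+z. ennreal (indicator {0..} (fst z) * indicator {0..} (snd z) * exp (a*(fst z + snd z)) *
            (if fst z \<le> snd z then (snd z - fst z) powr p else 0)) \<partial>(lborel \<Otimes>\<^sub>M lborel))
     = (\<integral>\<^sup>+v. \<integral>\<^sup>+w. ennreal (indicator {0..} v * indicator {0..} w * exp (a*(v + w)) *
            (if v \<le> w then (w - v) powr p else 0)) \<partial>lborel \<partial>lborel)"
    by (subst lborel.nn_integral_fst[symmetric]) (auto cong: if_cong)
  also have "\<dots> = (\<integral>\<^sup>+v. indicator {0..} v * (\<integral>\<^sup>+w. ennreal (exp (a*(v+w)) * (w-v) powr p) * indicator {v..} w \<partial>lborel) \<partial>lborel)"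
  proof (rule nn_integral_cong)
    fix v :: real
    show "(\<integral>\<^sup>+w. ennreal (indicator {0..} v * indicator {0..} w * exp (a*(v + w)) *
            (if v \<le> w then (w - v) powr p else 0)) \<partial>lborel) = indicator {0..} v * (\<integral>\<^sup>+w. ennreal (exp (a*(v+w)) * (w-v) powr p) * indicator {v..} w \<partial>lborel)"
    proof (cases "v \<ge> 0")
      case True
      have "\<And>w. ennreal (indicator {0..} v * indicator {0..} w * exp (a*(v + w)) *
            (if v \<le> w then (w - v) powr p else 0)) = ennreal (exp (a*(v+w)) * (w-v) powr p) * indicator {v..} w"
        using True by (auto split: split_indicator)
      then show ?thesis using True by simp
    qed simp
  qed
  also have "\<dots> = (\<integral>\<^sup>+v. ennreal (exp (2*a* v)) * indicator {0..} v \<partial>lborel) * ennreal (Gamma (p+1) / (-a) powr (p+1))"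
    unfolding nn_shift[OF a p] by (subst nn_integral_multc[symmetric]) (auto simp: mult_ac)
  also have "(\<integral>\<^sup>+v. ennreal (exp (2*a* v)) * indicator {0..} v \<partial>lborel) = ennreal (-1/(2*a))"
    using nn_exp_Ici[of "2*a"] a by (simp add: mult.assoc)
  finally show ?thesis by (simp add: mult.commute)
qed

lemma nn_P3b:
  fixes a p :: real assumes a: "a < 0" and p: "p > 0"
  shows "(\<integral>\<^sup>+z. ennreal (indicator {0..} (fst z) * indicator {0..} (snd z) * exp (a*(fst z + snd z)) *
            (if snd z \<le> fst z then (fst z - snd z) powr p else 0)) \<partial>(lborel \<Otimes>\<^sub>M lborel))
       = ennreal (Gamma (p+1) / (-a) powr (p+1)) * ennreal (-1/(2*a))"
proof -
  have "(\<integral>\<^sup>+z. ennreal (indicator {0..} (fst z) * indicator {0..} (snd z) * exp (a*(fst z + snd z)) *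
            (if snd z \<le> fst z then (fst z - snd z) powr p else 0)) \<partial>(lborel \<Otimes>\<^sub>M lborel))
     = (\<integral>\<^sup>+w. \<integral>\<^sup>+v. ennreal (indicator {0..} v * indicator {0..} w * exp (a*(v + w)) *
            (if w \<le> v then (v - w) powr p else 0)) \<partial>lborel \<partial>lborel)"
    by (subst lborel_pair.nn_integral_snd[symmetric]) (auto cong: if_cong)
  also have "\<dots> = (\<integral>\<^sup>+w. indicator {0..} w * (\<integral>\<^sup>+v. ennreal (exp (a*(w+v)) * (v-w) powr p) * indicator {w..} v \<partial>lborel) \<partial>lborel)"
  proof (rule nn_integral_cong)
    fix w :: real
    show "(\<integral>\<^sup>+v. ennreal (indicator {0..} v * indicator {0..} w * exp (a*(v + w)) *
            (if w \<le> v then (v - w) powr p else 0)) \<partial>lborel) = indicator {0..} w * (\<integral>\<^sup>+v. ennreal (exp (a*(w+v)) * (v-w) powr p) * indicator {w..} v \<partial>lborel)"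
    proof (cases "w \<ge> 0")
      case True
      have "\<And>v. ennreal (indicator {0..} v * indicator {0..} w * exp (a*(v + w)) *
            (if w \<le> v then (v - w) powr p else 0)) = ennreal (exp (a*(w+v)) * (v-w) powr p) * indicator {w..} v"
        using True by (auto split: split_indicator simp: add.commute)
      then show ?thesis using True by simp
    qed simp
  qed
  also have "\<dots> = (\<integral>\<^sup>+w. ennreal (exp (2*a*w)) * indicator {0..} w \<partial>lborel) * ennreal (Gamma (p+1) / (-a) powr (p+1))"
    unfolding nn_shift[OF a p] by (subst nn_integral_multc[symmetric]) (auto simp: mult_ac)
  also have "(\<integral>\<^sup>+w. ennreal (exp (2*a*w)) * indicator {0..} w \<partial>lborel) = ennreal (-1/(2*a))"
    using nn_exp_Ici[of "2*a"] a by (simp add: mult.assoc)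
  finally show ?thesis by (simp add: mult.commute)
qed

lemma nn_kJ:
  fixes a p :: real assumes a: "a < 0" and p: "p > 0"
  shows "(\<integral>\<^sup>+z. ennreal (kJ a p z) \<partial>(lborel \<Otimes>\<^sub>M lborel)) = ennreal (Gamma (p+1) / (-a) powr (p+1) / (-2*a))"
proof -
  define g where "g = Gamma (p+1) / (-a) powr (p+1)"
  have g0: "g \<ge> 0" unfolding g_def using p Gamma_real_pos[of "p+1"] by simp
  define k1 where "k1 = (\<lambda>z::real\<times>real. indicator {0..} (fst z) * indicator {0..} (snd z) * exp (a*(fst z + snd z)) * fst z powr p)"
  define k2 where "k2 = (\<lambda>z::real\<times>real. indicator {0..} (fst z) * indicator {0..} (snd z) * exp (a*(fst z + snd z)) * snd z powr p)"
  define k3 where "k3 = (\<lambda>z::real\<times>real. indicator {0..} (fst z) * indicator {0..} (snd z) * exp (a*(fst z + snd z)) *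
            (if fst z \<le> snd z then (snd z - fst z) powr p else 0))"
  define k4 where "k4 = (\<lambda>z::real\<times>real. indicator {0..} (fst z) * indicator {0..} (snd z) * exp (a*(fst z + snd z)) *
            (if snd z \<le> fst z then (fst z - snd z) powr p else 0))"
  have [measurable]: "k1 \<in> borel_measurable (lborel \<Otimes>\<^sub>M lborel)" "k2 \<in> borel_measurable (lborel \<Otimes>\<^sub>M lborel)"
    "k3 \<in> borel_measurable (lborel \<Otimes>\<^sub>M lborel)" "k4 \<in> borel_measurable (lborel \<Otimes>\<^sub>M lborel)"
    unfolding k1_def k2_def k3_def k4_def by measurable
  have nn: "k1 z \<ge> 0" "k2 z \<ge> 0" "k3 z \<ge> 0" "k4 z \<ge> 0" for z
    unfolding k1_def k2_def k3_def k4_def by (auto split: split_indicator)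
  have absd: "\<bar>v-w\<bar> powr p = (if v \<le> w then (w - v) powr p else 0) + (if w \<le> v then (v - w) powr p else 0)" for v w :: real
    by auto
  have pw: "2 * kJ a p z + (k3 z + k4 z) = k1 z + k2 z" for z
  proof -
    have alg: "\<And>E P Q A1 A2::real. 2 * (E * ((P + Q - (A1 + A2)) / 2)) + (E * A1 + E * A2) = E * P + E * Q"
      by (simp add: field_simps)
    show ?thesis unfolding kJ_def k1_def k2_def k3_def k4_def
      by (cases z) (simp only: prod.case fst_conv snd_conv absd alg)
  qed
  have pwe: "ennreal (2 * kJ a p z) + (ennreal (k3 z) + ennreal (k4 z)) = ennreal (k1 z) + ennreal (k2 z)" for z
    using pw[of z] nn[of z] kJ_nonneg[OF p, of a z]
    by (simp add: ennreal_plus[symmetric] del: ennreal_plus)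
  have "(\<integral>\<^sup>+z. ennreal (2 * kJ a p z) + (ennreal (k3 z) + ennreal (k4 z)) \<partial>(lborel \<Otimes>\<^sub>M lborel))
     = (\<integral>\<^sup>+z. ennreal (k1 z) + ennreal (k2 z) \<partial>(lborel \<Otimes>\<^sub>M lborel))"
    using pwe by simp
  then have "(\<integral>\<^sup>+z. ennreal (2 * kJ a p z) \<partial>(lborel \<Otimes>\<^sub>M lborel)) + ((\<integral>\<^sup>+z. ennreal (k3 z) \<partial>(lborel \<Otimes>\<^sub>M lborel)) + (\<integral>\<^sup>+z. ennreal (k4 z) \<partial>(lborel \<Otimes>\<^sub>M lborel)))
     = (\<integral>\<^sup>+z. ennreal (k1 z) \<partial>(lborel \<Otimes>\<^sub>M lborel)) + (\<integral>\<^sup>+z. ennreal (k2 z) \<partial>(lborel \<Otimes>\<^sub>M lborel))"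
    by (simp add: nn_integral_add)
  also have "(\<integral>\<^sup>+z. ennreal (k1 z) \<partial>(lborel \<Otimes>\<^sub>M lborel)) = ennreal g * ennreal (-1/a)"
    unfolding k1_def g_def by (rule nn_P1[OF a p])
  also have "(\<integral>\<^sup>+z. ennreal (k2 z) \<partial>(lborel \<Otimes>\<^sub>M lborel)) = ennreal g * ennreal (-1/a)"
    unfolding k2_def g_def by (rule nn_P2[OF a p])
  also have "(\<integral>\<^sup>+z. ennreal (k3 z) \<partial>(lborel \<Otimes>\<^sub>M lborel)) = ennreal g * ennreal (-1/(2*a))"
    unfolding k3_def g_def by (rule nn_P3a[OF a p])
  also have "(\<integral>\<^sup>+z. ennreal (k4 z) \<partial>(lborel \<Otimes>\<^sub>M lborel)) = ennreal g * ennreal (-1/(2*a))"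
    unfolding k4_def g_def by (rule nn_P3b[OF a p])
  also have "(\<integral>\<^sup>+z. ennreal (2 * kJ a p z) \<partial>(lborel \<Otimes>\<^sub>M lborel)) = 2 * (\<integral>\<^sup>+z. ennreal (kJ a p z) \<partial>(lborel \<Otimes>\<^sub>M lborel))"
    using kJ_nonneg[OF p] by (simp add: ennreal_mult nn_integral_cmult)
  finally have eq0: "2 * (\<integral>\<^sup>+z. ennreal (kJ a p z) \<partial>(lborel \<Otimes>\<^sub>M lborel)) + (ennreal g * ennreal (-1/(2*a)) + ennreal g * ennreal (-1/(2*a)))
      = ennreal g * ennreal (-1/a) + ennreal g * ennreal (-1/a)" .
  have n1: "-1/a \<ge> 0" "-1/(2*a) \<ge> 0" using a by (auto simp: divide_nonneg_neg)
  have eq: "2 * (\<integral>\<^sup>+z. ennreal (kJ a p z) \<partial>(lborel \<Otimes>\<^sub>M lborel)) + (ennreal (g * (-1/(2*a))) + ennreal (g * (-1/(2*a))))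
      = ennreal (g * (-1/a)) + ennreal (g * (-1/a))"
    using eq0 by (simp only: ennreal_mult[OF g0 n1(1)] ennreal_mult[OF g0 n1(2)])
  obtain x where x: "(\<integral>\<^sup>+z. ennreal (kJ a p z) \<partial>(lborel \<Otimes>\<^sub>M lborel)) = ennreal x" "x \<ge> 0"
  proof (cases "(\<integral>\<^sup>+z. ennreal (kJ a p z) \<partial>(lborel \<Otimes>\<^sub>M lborel))" rule: ennreal_cases)
    case (real r) then show ?thesis using that by blast
  next
    case top then have "\<top> = ennreal (g * (-1/a)) + ennreal (g * (-1/a))" using eq by simp
    then show ?thesis by (metis ennreal_add_eq_top ennreal_neq_top)
  qed
  define A where "A = g*(-1/(2*a))"
  define B where "B = g*(-1/a)"
  have nnA: "A \<ge> 0" "B \<ge> 0" unfolding A_def B_def using g0 n1 by (intro mult_nonneg_nonneg; simp only:)+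
  have h1: "ennreal (2*x) = 2 * ennreal x" using x by (simp add: ennreal_mult)
  have e3: "ennreal (A + A) = ennreal A + ennreal A" by (rule ennreal_plus) (use nnA in auto)
  have "ennreal (2 * x + (A + A)) = ennreal (2*x) + ennreal (A + A)"
    by (rule ennreal_plus) (use x nnA in auto)
  also have "\<dots> = ennreal (2*x) + (ennreal A + ennreal A)" unfolding e3 ..
  also have "\<dots> = ennreal B + ennreal B"
    unfolding h1 x(1)[symmetric] A_def B_def by (rule eq)
  also have "\<dots> = ennreal (B + B)"
    by (rule ennreal_plus[symmetric]) (use nnA in auto)
  finally have "ennreal (2 * x + (A + A)) = ennreal (B + B)" .
  then have "2 * x + (A + A) = B + B"
    using x nnA by (subst (asm) ennreal_inj) auto
  then have "x = (B + B - (A + A)) / 2" by simp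
  also have "\<dots> = g / (-2*a)" unfolding A_def B_def using a by (simp add: field_simps)
  finally have "x = g / (-2*a)" .
  then show ?thesis using x g_def by simp
qed

definition kJt :: "real \<Rightarrow> real \<Rightarrow> real \<Rightarrow> real \<times> real \<Rightarrow> real" where
  "kJt a p t z = indicator {0..t} (fst z) * indicator {0..t} (snd z) * kJ a p z"

lemma kJt_meas[measurable]: "kJt a p t \<in> borel_measurable (lborel \<Otimes>\<^sub>M lborel)"
  unfolding kJt_def by measurable

lemma kJ_integrable:
  fixes a p :: real assumes a: "a < 0" and p: "p > 0"
  shows "integrable (lborel \<Otimes>\<^sub>M lborel) (kJ a p)"
    and "(\<integral>z. kJ a p z \<partial>(lborel \<Otimes>\<^sub>M lborel)) = Gamma (p+1) / (-a) powr (p+1) / (-2*a)"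
proof -
  have g0: "Gamma (p+1) / (-a) powr (p+1) / (-2*a) \<ge> 0"
    using p a Gamma_real_pos[of "p+1"] by (intro divide_nonneg_pos) auto
  show "integrable (lborel \<Otimes>\<^sub>M lborel) (kJ a p)"
    by (rule integrableI_nonneg) (use kJ_nonneg[OF p] nn_kJ[OF a p] in auto)
  show "(\<integral>z. kJ a p z \<partial>(lborel \<Otimes>\<^sub>M lborel)) = Gamma (p+1) / (-a) powr (p+1) / (-2*a)"
    by (subst integral_eq_nn_integral) (use kJ_nonneg[OF p] nn_kJ[OF a p] g0 in auto)
qed

lemma kJt_lim:
  fixes a p :: real assumes a: "a < 0" and p: "p > 0"
  shows "((\<lambda>t. \<integral>z. kJt a p t z \<partial>(lborel \<Otimes>\<^sub>M lborel)) \<longlongrightarrow> Gamma (p+1) / (-a) powr (p+1) / (-2*a)) at_top"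
proof -
  have "((\<lambda>t. \<integral>z. kJt a p t z \<partial>(lborel \<Otimes>\<^sub>M lborel)) \<longlongrightarrow> (\<integral>z. kJ a p z \<partial>(lborel \<Otimes>\<^sub>M lborel))) at_top"
  proof (rule integral_dominated_convergence_at_top[where w="kJ a p"])
    show "integrable (lborel \<Otimes>\<^sub>M lborel) (kJ a p)" by (rule kJ_integrable[OF a p])
    show "AE z in lborel \<Otimes>\<^sub>M lborel. ((\<lambda>t. kJt a p t z) \<longlongrightarrow> kJ a p z) at_top"
    proof (rule AE_I2)
      fix z :: "real \<times> real"
      have "eventually (\<lambda>t. kJt a p t z = kJ a p z) at_top"
        using eventually_ge_at_top[of "\<bar>fst z\<bar> + \<bar>snd z\<bar>"]
        by eventually_elim (auto simp: kJt_def kJ_def split: split_indicator prod.splits)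
      then show "((\<lambda>t. kJt a p t z) \<longlongrightarrow> kJ a p z) at_top"
        by (rule tendsto_eventually)
    qed
    show "\<forall>\<^sub>F t in at_top. AE z in lborel \<Otimes>\<^sub>M lborel. norm (kJt a p t z) \<le> kJ a p z"
      using kJ_nonneg[OF p] by (auto simp: kJt_def split: split_indicator)
  qed auto
  then show ?thesis using kJ_integrable(2)[OF a p] by simp
qed

lemma kJt_bound:
  fixes a p :: real assumes a: "a < 0" and p: "p > 0"
  shows "0 \<le> (\<integral>z. kJt a p t z \<partial>(lborel \<Otimes>\<^sub>M lborel))"
    and "(\<integral>z. kJt a p t z \<partial>(lborel \<Otimes>\<^sub>M lborel)) \<le> Gamma (p+1) / (-a) powr (p+1) / (-2*a)"
proof -
  show "0 \<le> (\<integral>z. kJt a p t z \<partial>(lborel \<Otimes>\<^sub>M lborel))"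
    by (rule integral_nonneg_AE) (use kJ_nonneg[OF p] in \<open>auto simp: kJt_def\<close>)
  have "(\<integral>z. kJt a p t z \<partial>(lborel \<Otimes>\<^sub>M lborel)) \<le> (\<integral>z. kJ a p z \<partial>(lborel \<Otimes>\<^sub>M lborel))"
  proof (rule integral_mono_AE')
    show "integrable (lborel \<Otimes>\<^sub>M lborel) (kJ a p)" by (rule kJ_integrable[OF a p])
    show "AE z in lborel \<Otimes>\<^sub>M lborel. kJt a p t z \<le> kJ a p z"
      using kJ_nonneg[OF p] by (auto simp: kJt_def split: split_indicator)
    show "AE z in lborel \<Otimes>\<^sub>M lborel. 0 \<le> kJ a p z" using kJ_nonneg[OF p] by auto
  qed
  then show "(\<integral>z. kJt a p t z \<partial>(lborel \<Otimes>\<^sub>M lborel)) \<le> Gamma (p+1) / (-a) powr (p+1) / (-2*a)"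
    using kJ_integrable(2)[OF a p] by simp
qed




lemma floor_approx:
  fixes t :: real
  shows "(\<lambda>n. real_of_int \<lfloor>real (Suc n) * t\<rfloor> / real (Suc n)) \<longlonglongrightarrow> t"
proof (rule tendsto_sandwich[where f="\<lambda>n. t - 1 / real (Suc n)" and h="\<lambda>n. t"])
  show "\<forall>\<^sub>F n in sequentially. t - 1 / real (Suc n) \<le> real_of_int \<lfloor>real (Suc n) * t\<rfloor> / real (Suc n)"
  proof (intro always_eventually allI)
    fix n
    have c: "real (Suc n) > 0" by simp
    have "real (Suc n) * t - 1 \<le> real_of_int \<lfloor>real (Suc n) * t\<rfloor>"
      using real_of_int_floor_gt_diff_one[of "real (Suc n) * t"] by linarith
    then have "(real (Suc n) * t - 1) / real (Suc n) \<le> real_of_int \<lfloor>real (Suc n) * t\<rfloor> / real (Suc n)"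
      by (rule divide_right_mono) (use c in simp)
    moreover have "(real (Suc n) * t - 1) / real (Suc n) = t - 1 / real (Suc n)"
      using c by (simp add: diff_divide_distrib)
    ultimately show "t - 1 / real (Suc n) \<le> real_of_int \<lfloor>real (Suc n) * t\<rfloor> / real (Suc n)"
      by simp
  qed
  show "\<forall>\<^sub>F n in sequentially. real_of_int \<lfloor>real (Suc n) * t\<rfloor> / real (Suc n) \<le> t"
  proof (intro always_eventually allI)
    fix n
    have c: "real (Suc n) > 0" by simp
    have "real_of_int \<lfloor>real (Suc n) * t\<rfloor> \<le> real (Suc n) * t" by (rule of_int_floor_le)
    then have "real_of_int \<lfloor>real (Suc n) * t\<rfloor> / real (Suc n) \<le> real (Suc n) * t / real (Suc n)"
      by (rule divide_right_mono) (use c in simp)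
    then show "real_of_int \<lfloor>real (Suc n) * t\<rfloor> / real (Suc n) \<le> t"
      using c by simp
  qed
  have "(\<lambda>n. 1 / real (Suc n)) \<longlonglongrightarrow> 0" by (rule LIMSEQ_Suc[OF lim_const_over_n])
  then show "(\<lambda>n. t - 1 / real (Suc n)) \<longlonglongrightarrow> t"
    using tendsto_diff[OF tendsto_const[of t]] by fastforce
qed simp

lemma joint_meas:
  fixes X :: "real \<Rightarrow> 'a \<Rightarrow> real"
  assumes m: "\<And>t. X t \<in> borel_measurable M"
    and c: "\<And>\<omega>. \<omega> \<in> space M \<Longrightarrow> continuous_on UNIV (\<lambda>t. X t \<omega>)"
  shows "(\<lambda>(t,\<omega>). X t \<omega>) \<in> borel_measurable (lborel \<Otimes>\<^sub>M M)"
proof (rule borel_measurable_LIMSEQ_real[where u="\<lambda>n (z::real \<times> 'a). X (real_of_int \<lfloor>real (Suc n) * fst z\<rfloor> / real (Suc n)) (snd z)"])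
  fix z :: "real \<times> 'a" assume z: "z \<in> space (lborel \<Otimes>\<^sub>M M)"
  then have \<omega>: "snd z \<in> space M" by (auto simp: space_pair_measure)
  show "(\<lambda>n. X (real_of_int \<lfloor>real (Suc n) * fst z\<rfloor> / real (Suc n)) (snd z)) \<longlonglongrightarrow> (case z of (t, \<omega>) \<Rightarrow> X t \<omega>)"
    using continuous_on_tendsto_compose[OF c[OF \<omega>] floor_approx[of "fst z"]]
    by (cases z) auto
next
  fix n :: nat
  show "(\<lambda>z. X (real_of_int \<lfloor>real (Suc n) * fst z\<rfloor> / real (Suc n)) (snd z)) \<in> borel_measurable (lborel \<Otimes>\<^sub>M M)"
  proof (rule measurable_compose_countable'[where I=UNIV and g="\<lambda>z. \<lfloor>real (Suc n) * fst z\<rfloor>"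
        and f="\<lambda>i z. X (real_of_int i / real (Suc n)) (snd z)"])
    show "\<And>i. (\<lambda>z. X (real_of_int i / real (Suc n)) (snd z)) \<in> borel_measurable (lborel \<Otimes>\<^sub>M M)"
      using measurable_compose[OF measurable_snd m] by simp
    show "(\<lambda>z. \<lfloor>real (Suc n) * fst z\<rfloor>) \<in> lborel \<Otimes>\<^sub>M M \<rightarrow>\<^sub>M count_space UNIV"
      by measurable
  qed auto
qed

lemma fub1:
  fixes F :: "'b \<Rightarrow> 'a \<Rightarrow> real"
  assumes N: "sigma_finite_measure N" and M: "sigma_finite_measure M"
    and meas: "(\<lambda>(y,\<omega>). F y \<omega>) \<in> borel_measurable (N \<Otimes>\<^sub>M M)"
    and fin: "(\<integral>\<^sup>+y. \<integral>\<^sup>+\<omega>. ennreal \<bar>F y \<omega>\<bar> \<partial>M \<partial>N) < \<infinity>"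
  shows "integrable M (\<lambda>\<omega>. \<integral>y. F y \<omega> \<partial>N)"
    and "(\<integral>\<omega>. (\<integral>y. F y \<omega> \<partial>N) \<partial>M) = (\<integral>y. (\<integral>\<omega>. F y \<omega> \<partial>M) \<partial>N)"
proof -
  interpret pair_sigma_finite N M using N M by (simp add: pair_sigma_finite_def)
  have int: "integrable (N \<Otimes>\<^sub>M M) (\<lambda>(y,\<omega>). F y \<omega>)"
  proof (rule integrableI_bounded)
    show "(\<lambda>(y,\<omega>). F y \<omega>) \<in> borel_measurable (N \<Otimes>\<^sub>M M)" by (rule meas)
    have "(\<integral>\<^sup>+ p. ennreal (norm (case p of (y,\<omega>) \<Rightarrow> F y \<omega>)) \<partial>(N \<Otimes>\<^sub>M M)) = (\<integral>\<^sup>+y. \<integral>\<^sup>+\<omega>. ennreal \<bar>F y \<omega>\<bar> \<partial>M \<partial>N)"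
      by (subst M2.nn_integral_fst[symmetric]) (use meas in auto)
    then show "(\<integral>\<^sup>+ p. ennreal (norm (case p of (y,\<omega>) \<Rightarrow> F y \<omega>)) \<partial>(N \<Otimes>\<^sub>M M)) < \<infinity>" using fin by simp
  qed
  show "integrable M (\<lambda>\<omega>. \<integral>y. F y \<omega> \<partial>N)" by (rule integrable_snd[OF int])
  show "(\<integral>\<omega>. (\<integral>y. F y \<omega> \<partial>N) \<partial>M) = (\<integral>y. (\<integral>\<omega>. F y \<omega> \<partial>M) \<partial>N)"
    by (rule Fubini_integral[OF int])
qed

lemma nn_abs_prod_le:
  fixes f g :: "'a \<Rightarrow> real"
  assumes [measurable]: "f \<in> borel_measurable M" "g \<in> borel_measurable M"
  shows "(\<integral>\<^sup>+\<omega>. ennreal \<bar>f \<omega> * g \<omega>\<bar> \<partial>M) \<le> (\<integral>\<^sup>+\<omega>. ennreal ((f \<omega>)\<^sup>2) \<partial>M) + (\<integral>\<^sup>+\<omega>. ennreal ((g \<omega>)\<^sup>2) \<partial>M)"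
proof -
  have "(\<integral>\<^sup>+\<omega>. ennreal \<bar>f \<omega> * g \<omega>\<bar> \<partial>M) \<le> (\<integral>\<^sup>+\<omega>. ennreal ((f \<omega>)\<^sup>2) + ennreal ((g \<omega>)\<^sup>2) \<partial>M)"
  proof (rule nn_integral_mono)
    fix \<omega>
    have "\<bar>f \<omega> * g \<omega>\<bar> \<le> (f \<omega>)\<^sup>2 + (g \<omega>)\<^sup>2"
    proof -
      have "2 * \<bar>f \<omega>\<bar> * \<bar>g \<omega>\<bar> \<le> \<bar>f \<omega>\<bar>\<^sup>2 + \<bar>g \<omega>\<bar>\<^sup>2" by (rule sum_squares_bound)
      moreover have "0 \<le> \<bar>f \<omega>\<bar> * \<bar>g \<omega>\<bar>" by simp
      ultimately show ?thesis by (simp only: abs_mult power2_abs)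
    qed
    then show "ennreal \<bar>f \<omega> * g \<omega>\<bar> \<le> ennreal ((f \<omega>)\<^sup>2) + ennreal ((g \<omega>)\<^sup>2)"
      by (simp add: ennreal_plus[symmetric] del: ennreal_plus)
  qed
  also have "\<dots> = (\<integral>\<^sup>+\<omega>. ennreal ((f \<omega>)\<^sup>2) \<partial>M) + (\<integral>\<^sup>+\<omega>. ennreal ((g \<omega>)\<^sup>2) \<partial>M)"
    by (rule nn_integral_add) auto
  finally show ?thesis .
qed

lemma prod_integral:
  fixes f g :: "real \<Rightarrow> real"
  assumes f: "integrable lborel f" and g: "integrable lborel g"
  shows "integrable (lborel \<Otimes>\<^sub>M lborel) (\<lambda>z. f (fst z) * g (snd z))"
    and "(\<integral>z. f (fst z) * g (snd z) \<partial>(lborel \<Otimes>\<^sub>M lborel)) = (\<integral>s. f s \<partial>lborel) * (\<integral>u. g u \<partial>lborel)"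
proof -
  have [measurable]: "f \<in> borel_measurable borel" "g \<in> borel_measurable borel"
    using f g by auto
  show int: "integrable (lborel \<Otimes>\<^sub>M lborel) (\<lambda>z. f (fst z) * g (snd z))"
  proof (rule lborel_pair.Fubini_integrable)
    show "(\<lambda>z. f (fst z) * g (snd z)) \<in> borel_measurable (lborel \<Otimes>\<^sub>M lborel)" by measurable
    show "integrable lborel (\<lambda>x. \<integral>y. norm (f (fst (x, y)) * g (snd (x, y))) \<partial>lborel)"
      using f g by (simp add: abs_mult)
    show "AE x in lborel. integrable lborel (\<lambda>y. f (fst (x, y)) * g (snd (x, y)))"
      using g by simp
  qed
  have "(\<integral>z. f (fst z) * g (snd z) \<partial>(lborel \<Otimes>\<^sub>M lborel)) = (\<integral>s. (\<integral>u. f s * g u \<partial>lborel) \<partial>lborel)"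
    using lborel_pair.integral_fst'[OF int] by simp
  also have "\<dots> = (\<integral>s. f s * (\<integral>u. g u \<partial>lborel) \<partial>lborel)" by simp
  also have "\<dots> = (\<integral>s. f s \<partial>lborel) * (\<integral>u. g u \<partial>lborel)" by simp
  finally show "(\<integral>z. f (fst z) * g (snd z) \<partial>(lborel \<Otimes>\<^sub>M lborel)) = (\<integral>s. f s \<partial>lborel) * (\<integral>u. g u \<partial>lborel)" .
qed

lemma fub2:
  fixes F G :: "real \<Rightarrow> 'a \<Rightarrow> real"
  assumes M: "sigma_finite_measure M"
    and mF: "(\<lambda>(s,\<omega>). F s \<omega>) \<in> borel_measurable (lborel \<Otimes>\<^sub>M M)"
    and mG: "(\<lambda>(s,\<omega>). G s \<omega>) \<in> borel_measurable (lborel \<Otimes>\<^sub>M M)"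
    and iF: "\<And>\<omega>. \<omega> \<in> space M \<Longrightarrow> integrable lborel (\<lambda>s. F s \<omega>)"
    and iG: "\<And>\<omega>. \<omega> \<in> space M \<Longrightarrow> integrable lborel (\<lambda>s. G s \<omega>)"
    and sF: "\<And>s \<omega>. s \<notin> {0..T} \<Longrightarrow> F s \<omega> = 0"
    and sG: "\<And>s \<omega>. s \<notin> {0..T} \<Longrightarrow> G s \<omega> = 0"
    and bF: "\<And>s. (\<integral>\<^sup>+\<omega>. ennreal ((F s \<omega>)\<^sup>2) \<partial>M) \<le> ennreal C"
    and bG: "\<And>s. (\<integral>\<^sup>+\<omega>. ennreal ((G s \<omega>)\<^sup>2) \<partial>M) \<le> ennreal C"
  shows "integrable M (\<lambda>\<omega>. (\<integral>s. F s \<omega> \<partial>lborel) * (\<integral>u. G u \<omega> \<partial>lborel))"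
    and "(\<integral>\<omega>. (\<integral>s. F s \<omega> \<partial>lborel) * (\<integral>u. G u \<omega> \<partial>lborel) \<partial>M)
         = (\<integral>z. (\<integral>\<omega>. F (fst z) \<omega> * G (snd z) \<omega> \<partial>M) \<partial>(lborel \<Otimes>\<^sub>M lborel))"
proof -
  interpret M: sigma_finite_measure M by (rule M)
  have LLs: "sigma_finite_measure (lborel \<Otimes>\<^sub>M lborel)"
    by (rule lborel_pair.sigma_finite_measure_axioms)
  have p1: "(\<lambda>x. (fst (fst x), snd x)) \<in> (lborel \<Otimes>\<^sub>M lborel) \<Otimes>\<^sub>M M \<rightarrow>\<^sub>M lborel \<Otimes>\<^sub>M M" by measurable
  have p2: "(\<lambda>x. (snd (fst x), snd x)) \<in> (lborel \<Otimes>\<^sub>M lborel) \<Otimes>\<^sub>M M \<rightarrow>\<^sub>M lborel \<Otimes>\<^sub>M M" by measurable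
  have mF1: "(\<lambda>x. F (fst (fst x)) (snd x)) \<in> borel_measurable ((lborel \<Otimes>\<^sub>M lborel) \<Otimes>\<^sub>M M)"
    using measurable_compose[OF p1 mF] by simp
  have mG1: "(\<lambda>x. G (snd (fst x)) (snd x)) \<in> borel_measurable ((lborel \<Otimes>\<^sub>M lborel) \<Otimes>\<^sub>M M)"
    using measurable_compose[OF p2 mG] by simp
  have mF2: "F s \<in> borel_measurable M" for s
    using measurable_Pair2[OF mF, of s] by simp
  have mG2: "G s \<in> borel_measurable M" for s
    using measurable_Pair2[OF mG, of s] by simp
  have meas: "(\<lambda>(z,\<omega>). F (fst z) \<omega> * G (snd z) \<omega>) \<in> borel_measurable ((lborel \<Otimes>\<^sub>M lborel) \<Otimes>\<^sub>M M)"
    using borel_measurable_times[OF mF1 mG1] by (simp add: case_prod_beta')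
  have C0: "ennreal C + ennreal C = ennreal (2*C)"
  proof (cases "C \<ge> 0")
    case True then show ?thesis by (simp add: ennreal_plus[symmetric] del: ennreal_plus)
  qed (simp add: ennreal_neg)
  have pt: "(\<integral>\<^sup>+\<omega>. ennreal \<bar>F (fst z) \<omega> * G (snd z) \<omega>\<bar> \<partial>M) \<le> indicator ({0..T} \<times> {0..T}) z * ennreal (2*C)" for z
  proof (cases "z \<in> {0..T} \<times> {0..T}")
    case True
    have "(\<integral>\<^sup>+\<omega>. ennreal \<bar>F (fst z) \<omega> * G (snd z) \<omega>\<bar> \<partial>M) \<le> ennreal C + ennreal C"
      using nn_abs_prod_le[OF mF2 mG2, of "fst z" "snd z"] bF bG
      by (meson add_mono order_trans)
    also have "\<dots> = ennreal (2*C)"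
      using C0 by auto
    finally show ?thesis using True by simp
  next
    case False
    then have "fst z \<notin> {0..T} \<or> snd z \<notin> {0..T}" by (cases z) auto
    then show ?thesis using False sF sG by auto
  qed
  have fin: "(\<integral>\<^sup>+z. \<integral>\<^sup>+\<omega>. ennreal \<bar>F (fst z) \<omega> * G (snd z) \<omega>\<bar> \<partial>M \<partial>(lborel \<Otimes>\<^sub>M lborel)) < \<infinity>"
  proof -
    have "(\<integral>\<^sup>+z. \<integral>\<^sup>+\<omega>. ennreal \<bar>F (fst z) \<omega> * G (snd z) \<omega>\<bar> \<partial>M \<partial>(lborel \<Otimes>\<^sub>M lborel))
        \<le> (\<integral>\<^sup>+z. ennreal (2*C) * indicator ({0..T} \<times> {0..T}) z \<partial>(lborel \<Otimes>\<^sub>M lborel))"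
      by (rule nn_integral_mono) (use pt in \<open>simp add: mult.commute\<close>)
    also have "\<dots> = ennreal (2*C) * emeasure (lborel \<Otimes>\<^sub>M lborel) ({0..T} \<times> {0..T})"
      by (rule nn_integral_cmult_indicator) simp
    also have "\<dots> = ennreal (2*C) * (emeasure lborel {0..T} * emeasure lborel {0..T})"
      by (subst lborel.emeasure_pair_measure_Times) auto
    also have "\<dots> < \<infinity>" by (simp add: ennreal_mult_less_top emeasure_lborel_Icc_eq)
    finally show ?thesis .
  qed
  note F1 = fub1[OF LLs M meas fin]
  have pw: "(\<integral>z. F (fst z) \<omega> * G (snd z) \<omega> \<partial>(lborel \<Otimes>\<^sub>M lborel)) = (\<integral>s. F s \<omega> \<partial>lborel) * (\<integral>u. G u \<omega> \<partial>lborel)"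
    if "\<omega> \<in> space M" for \<omega>
    using prod_integral(2)[OF iF[OF that] iG[OF that]] .
  show "integrable M (\<lambda>\<omega>. (\<integral>s. F s \<omega> \<partial>lborel) * (\<integral>u. G u \<omega> \<partial>lborel))"
    by (rule Bochner_Integration.integrable_cong[THEN iffD1, OF refl _ F1(1)]) (simp add: pw)
  have "(\<integral>\<omega>. (\<integral>s. F s \<omega> \<partial>lborel) * (\<integral>u. G u \<omega> \<partial>lborel) \<partial>M) = (\<integral>\<omega>. (\<integral>z. F (fst z) \<omega> * G (snd z) \<omega> \<partial>(lborel \<Otimes>\<^sub>M lborel)) \<partial>M)"
    by (rule Bochner_Integration.integral_cong) (auto simp: pw)
  also have "\<dots> = (\<integral>z. (\<integral>\<omega>. F (fst z) \<omega> * G (snd z) \<omega> \<partial>M) \<partial>(lborel \<Otimes>\<^sub>M lborel))"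
    by (rule F1(2))
  finally show "(\<integral>\<omega>. (\<integral>s. F s \<omega> \<partial>lborel) * (\<integral>u. G u \<omega> \<partial>lborel) \<partial>M)
         = (\<integral>z. (\<integral>\<omega>. F (fst z) \<omega> * G (snd z) \<omega> \<partial>M) \<partial>(lborel \<Otimes>\<^sub>M lborel))" .
qed

lemma fub1x:
  fixes F :: "real \<Rightarrow> 'a \<Rightarrow> real" and X :: "'a \<Rightarrow> real"
  assumes M: "sigma_finite_measure M"
    and mF: "(\<lambda>(s,\<omega>). F s \<omega>) \<in> borel_measurable (lborel \<Otimes>\<^sub>M M)"
    and mX: "X \<in> borel_measurable M"
    and sF: "\<And>s \<omega>. s \<notin> {0..T} \<Longrightarrow> F s \<omega> = 0"
    and bF: "\<And>s. (\<integral>\<^sup>+\<omega>. ennreal ((F s \<omega>)\<^sup>2) \<partial>M) \<le> ennreal C"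
    and bX: "(\<integral>\<^sup>+\<omega>. ennreal ((X \<omega>)\<^sup>2) \<partial>M) \<le> ennreal C"
  shows "integrable M (\<lambda>\<omega>. (\<integral>s. F s \<omega> \<partial>lborel) * X \<omega>)"
    and "(\<integral>\<omega>. (\<integral>s. F s \<omega> \<partial>lborel) * X \<omega> \<partial>M) = (\<integral>s. (\<integral>\<omega>. F s \<omega> * X \<omega> \<partial>M) \<partial>lborel)"
proof -
  interpret M: sigma_finite_measure M by (rule M)
  have mF2: "F s \<in> borel_measurable M" for s
    using measurable_Pair2[OF mF, of s] by simp
  have meas: "(\<lambda>(s,\<omega>). F s \<omega> * X \<omega>) \<in> borel_measurable (lborel \<Otimes>\<^sub>M M)"
    using borel_measurable_times[OF mF measurable_compose[OF measurable_snd mX]] by (simp add: case_prod_beta')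
  have C0: "ennreal C + ennreal C = ennreal (2*C)"
  proof (cases "C \<ge> 0")
    case True then show ?thesis by (simp add: ennreal_plus[symmetric] del: ennreal_plus)
  qed (simp add: ennreal_neg)
  have pt: "(\<integral>\<^sup>+\<omega>. ennreal \<bar>F s \<omega> * X \<omega>\<bar> \<partial>M) \<le> ennreal (2*C) * indicator {0..T} s" for s
  proof (cases "s \<in> {0..T}")
    case True
    have "(\<integral>\<^sup>+\<omega>. ennreal \<bar>F s \<omega> * X \<omega>\<bar> \<partial>M) \<le> ennreal C + ennreal C"
      using nn_abs_prod_le[OF mF2 mX, of s] bF bX
      by (meson add_mono order_trans)
    also have "\<dots> = ennreal (2*C)"
      using C0 by auto
    finally show ?thesis using True by simp
  next
    case False
    then show ?thesis using sF by auto
  qed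
  have fin: "(\<integral>\<^sup>+s. \<integral>\<^sup>+\<omega>. ennreal \<bar>F s \<omega> * X \<omega>\<bar> \<partial>M \<partial>lborel) < \<infinity>"
  proof -
    have "(\<integral>\<^sup>+s. \<integral>\<^sup>+\<omega>. ennreal \<bar>F s \<omega> * X \<omega>\<bar> \<partial>M \<partial>lborel)
        \<le> (\<integral>\<^sup>+s. ennreal (2*C) * indicator {0..T} s \<partial>lborel)"
      by (rule nn_integral_mono) (use pt in simp)
    also have "\<dots> = ennreal (2*C) * emeasure lborel {0..T}"
      by (rule nn_integral_cmult_indicator) simp
    also have "\<dots> < \<infinity>" by (simp add: ennreal_mult_less_top emeasure_lborel_Icc_eq)
    finally show ?thesis .
  qed
  note F1 = fub1[OF sigma_finite_lborel M meas fin]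
  show "integrable M (\<lambda>\<omega>. (\<integral>s. F s \<omega> \<partial>lborel) * X \<omega>)"
    using F1(1) by simp
  show "(\<integral>\<omega>. (\<integral>s. F s \<omega> \<partial>lborel) * X \<omega> \<partial>M) = (\<integral>s. (\<integral>\<omega>. F s \<omega> * X \<omega> \<partial>M) \<partial>lborel)"
    using F1(2) by simp
qed




lemma abs_prod_le: fixes x y :: real shows "\<bar>x * y\<bar> \<le> x\<^sup>2 + y\<^sup>2"
proof -
  have "2 * \<bar>x\<bar> * \<bar>y\<bar> \<le> \<bar>x\<bar>\<^sup>2 + \<bar>y\<bar>\<^sup>2" by (rule sum_squares_bound)
  moreover have "0 \<le> \<bar>x\<bar> * \<bar>y\<bar>" by simp
  ultimately show ?thesis by (simp only: abs_mult power2_abs)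
qed

locale RS = prob_space M for M :: "'a measure" +
  fixes H :: real and R :: "real \<Rightarrow> 'a \<Rightarrow> real"
  assumes H1: "1/2 < H" and H2: "H < 1"
    and Rmeas: "\<And>t. R t \<in> borel_measurable M"
    and R0: "\<And>\<omega>. \<omega> \<in> space M \<Longrightarrow> R 0 \<omega> = 0"
    and Rcont: "\<And>\<omega>. \<omega> \<in> space M \<Longrightarrow> continuous_on {0..} (\<lambda>t. R t \<omega>)"
    and Rsq: "\<And>t. t \<ge> 0 \<Longrightarrow> integrable M (\<lambda>\<omega>. (R t \<omega>)\<^sup>2)"
    and Rmean: "\<And>t. t \<ge> 0 \<Longrightarrow> (\<integral>\<omega>. R t \<omega> \<partial>M) = 0"
    and Rcov: "\<And>t s. t \<ge> 0 \<Longrightarrow> s \<ge> 0 \<Longrightarrow> (\<integral>\<omega>. R t \<omega> * R s \<omega> \<partial>M) = rosen_cov H t s"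

lemma rosen_RS:
  assumes "rosenblatt_like M H R" "1/2 < H" "H < 1"
  shows "RS M H R"
  using assms unfolding rosenblatt_like_def RS_def RS_axioms_def by auto

context RS
begin

definition Rp :: "real \<Rightarrow> 'a \<Rightarrow> real" where "Rp s \<omega> = R (max s 0) \<omega>"

lemma p_pos: "2*H > 1" using H1 by simp

lemma Rp_meas[measurable]: "Rp s \<in> borel_measurable M"
  unfolding Rp_def using Rmeas by simp

lemma Rp_cont: "\<omega> \<in> space M \<Longrightarrow> continuous_on UNIV (\<lambda>s. Rp s \<omega>)"
  unfolding Rp_def
  by (rule continuous_on_compose2[OF Rcont]) (auto intro!: continuous_intros)

lemma Rp_joint[measurable]: "(\<lambda>(s,\<omega>). Rp s \<omega>) \<in> borel_measurable (lborel \<Otimes>\<^sub>M M)"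
  by (rule joint_meas) (use Rp_cont in auto)

lemma Rp_sq: "integrable M (\<lambda>\<omega>. (Rp s \<omega>)\<^sup>2)"
  unfolding Rp_def using Rsq[of "max s 0"] by simp

lemma Rp_prod_int: "integrable M (\<lambda>\<omega>. Rp s \<omega> * Rp u \<omega>)"
proof (rule Bochner_Integration.integrable_bound[OF Bochner_Integration.integrable_add[OF Rp_sq[of s] Rp_sq[of u]]])
  show "AE \<omega> in M. norm (Rp s \<omega> * Rp u \<omega>) \<le> norm ((Rp s \<omega>)\<^sup>2 + (Rp u \<omega>)\<^sup>2)"
  proof (rule AE_I2)
    fix \<omega>
    show "norm (Rp s \<omega> * Rp u \<omega>) \<le> norm ((Rp s \<omega>)\<^sup>2 + (Rp u \<omega>)\<^sup>2)"
      using abs_prod_le[of "Rp s \<omega>" "Rp u \<omega>"] by simp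
  qed
qed simp

lemma Rp_int: "integrable M (Rp s)"
proof (rule Bochner_Integration.integrable_bound[OF Bochner_Integration.integrable_add[OF integrable_const[of 1] Rp_sq[of s]]])
  show "AE \<omega> in M. norm (Rp s \<omega>) \<le> norm (1 + (Rp s \<omega>)\<^sup>2)"
  proof (rule AE_I2)
    fix \<omega>
    have "\<bar>Rp s \<omega>\<bar> \<le> 1 + (Rp s \<omega>)\<^sup>2"
      using sum_squares_bound[of "\<bar>Rp s \<omega>\<bar>" 1] zero_le_power2[of "Rp s \<omega>"] by (simp add: power2_abs)
    then show "norm (Rp s \<omega>) \<le> norm (1 + (Rp s \<omega>)\<^sup>2)" by simp
  qed
qed simp

lemma Rp_mean: "(\<integral>\<omega>. Rp s \<omega> \<partial>M) = 0"
  unfolding Rp_def using Rmean[of "max s 0"] by simp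

lemma Rp_cov: "(\<integral>\<omega>. Rp s \<omega> * Rp u \<omega> \<partial>M) = rosen_cov H (max s 0) (max u 0)"
  unfolding Rp_def using Rcov[of "max s 0" "max u 0"] by simp

lemma rosen_cov_diag: "rosen_cov H s s = s powr (2*H)"
  unfolding rosen_cov_def by simp

lemma nn_Rp_sq: "(\<integral>\<^sup>+\<omega>. ennreal ((Rp s \<omega>)\<^sup>2) \<partial>M) = ennreal ((max s 0) powr (2*H))"
proof -
  have "(\<integral>\<^sup>+\<omega>. ennreal ((Rp s \<omega>)\<^sup>2) \<partial>M) = ennreal (\<integral>\<omega>. (Rp s \<omega>)\<^sup>2 \<partial>M)"
    by (rule nn_integral_eq_integral[OF Rp_sq]) simp
  also have "(\<integral>\<omega>. (Rp s \<omega>)\<^sup>2 \<partial>M) = (max s 0) powr (2*H)"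
    using Rp_cov[of s s] by (simp add: power2_eq_square rosen_cov_diag)
  finally show ?thesis .
qed

lemma Rp_lin:
  shows "integrable M (\<lambda>\<omega>. (Rp a \<omega> - Rp b \<omega>) * (Rp c \<omega> - Rp d \<omega>))"
    and "(\<integral>\<omega>. (Rp a \<omega> - Rp b \<omega>) * (Rp c \<omega> - Rp d \<omega>) \<partial>M)
       = rosen_cov H (max a 0) (max c 0) - rosen_cov H (max a 0) (max d 0)
         - rosen_cov H (max b 0) (max c 0) + rosen_cov H (max b 0) (max d 0)"
proof -
  have eq: "(\<lambda>\<omega>. (Rp a \<omega> - Rp b \<omega>) * (Rp c \<omega> - Rp d \<omega>))
      = (\<lambda>\<omega>. Rp a \<omega> * Rp c \<omega> - Rp a \<omega> * Rp d \<omega> - Rp b \<omega> * Rp c \<omega> + Rp b \<omega> * Rp d \<omega>)"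
    by (auto simp: algebra_simps)
  show "integrable M (\<lambda>\<omega>. (Rp a \<omega> - Rp b \<omega>) * (Rp c \<omega> - Rp d \<omega>))"
    unfolding eq by (intro Bochner_Integration.integrable_add Bochner_Integration.integrable_diff Rp_prod_int)
  show "(\<integral>\<omega>. (Rp a \<omega> - Rp b \<omega>) * (Rp c \<omega> - Rp d \<omega>) \<partial>M)
       = rosen_cov H (max a 0) (max c 0) - rosen_cov H (max a 0) (max d 0)
         - rosen_cov H (max b 0) (max c 0) + rosen_cov H (max b 0) (max d 0)"
    unfolding eq
    by (simp add: Bochner_Integration.integral_add Bochner_Integration.integral_diff
        Bochner_Integration.integrable_add Bochner_Integration.integrable_diff Rp_prod_int Rp_cov)
qed

lemma Dcov:
  assumes "0 \<le> v" "v \<le> t" "0 \<le> w" "w \<le> t"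
  shows "(\<integral>\<omega>. (Rp t \<omega> - Rp (t-v) \<omega>) * (Rp t \<omega> - Rp (t-w) \<omega>) \<partial>M)
       = (v powr (2*H) + w powr (2*H) - \<bar>v - w\<bar> powr (2*H)) / 2"
proof -
  have m: "max t 0 = t" "max (t-v) 0 = t - v" "max (t-w) 0 = t-w" using assms by auto
  have a1: "\<bar>t - (t - w)\<bar> = w" "\<bar>(t - v) - t\<bar> = v" "\<bar>(t-v) - (t-w)\<bar> = \<bar>v - w\<bar>"
    using assms by auto
  show ?thesis unfolding Rp_lin(2) m rosen_cov_def a1
    by (simp add: field_simps)
qed

lemma DR:
  assumes "0 \<le> v" "v \<le> t"
  shows "(\<integral>\<omega>. (Rp t \<omega> - Rp (t-v) \<omega>) * Rp t \<omega> \<partial>M)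
       = t powr (2*H) - rosen_cov H (t - v) t"
proof -
  have eq: "(\<lambda>\<omega>. (Rp t \<omega> - Rp (t-v) \<omega>) * Rp t \<omega>) = (\<lambda>\<omega>. Rp t \<omega> * Rp t \<omega> - Rp (t-v) \<omega> * Rp t \<omega>)"
    by (auto simp: algebra_simps)
  have m: "max t 0 = t" "max (t-v) 0 = t - v" using assms by auto
  show ?thesis unfolding eq
    by (simp add: Bochner_Integration.integral_diff Rp_prod_int Rp_cov m rosen_cov_diag)
qed

lemma nn_D_sq:
  assumes "0 \<le> v" "v \<le> t"
  shows "(\<integral>\<^sup>+\<omega>. ennreal ((Rp t \<omega> - Rp (t-v) \<omega>)\<^sup>2) \<partial>M) = ennreal (v powr (2*H))"
proof -
  have "(\<integral>\<^sup>+\<omega>. ennreal ((Rp t \<omega> - Rp (t-v) \<omega>)\<^sup>2) \<partial>M) = ennreal (\<integral>\<omega>. (Rp t \<omega> - Rp (t-v) \<omega>) * (Rp t \<omega> - Rp (t-v) \<omega>) \<partial>M)"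
    unfolding power2_eq_square by (rule nn_integral_eq_integral[OF Rp_lin(1)]) simp
  also have "\<dots> = ennreal (v powr (2*H))"
    using Dcov[OF assms assms] by simp
  finally show ?thesis .
qed


lemma Rp_cont_shift: "\<omega> \<in> space M \<Longrightarrow> continuous_on UNIV (\<lambda>v. Rp (t - v) \<omega>)"
  by (rule continuous_on_compose2[OF Rp_cont]) (auto intro!: continuous_intros)

definition FW :: "real \<Rightarrow> real \<Rightarrow> real \<Rightarrow> 'a \<Rightarrow> real" where
  "FW a t v \<omega> = indicator {0..t} v * exp (a * v) * (Rp t \<omega> - Rp (t - v) \<omega>)"

definition Wt :: "real \<Rightarrow> real \<Rightarrow> 'a \<Rightarrow> real" where
  "Wt a t \<omega> = (\<integral>v. FW a t v \<omega> \<partial>lborel)"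

definition FI :: "real \<Rightarrow> real \<Rightarrow> real \<Rightarrow> 'a \<Rightarrow> real" where
  "FI a t s \<omega> = indicator {0..t} s * (exp (a * (t - s)) * Rp s \<omega>)"

definition It :: "real \<Rightarrow> real \<Rightarrow> 'a \<Rightarrow> real" where
  "It a t \<omega> = (\<integral>s. FI a t s \<omega> \<partial>lborel)"

lemma FW_meas[measurable]: "(\<lambda>(v,\<omega>). FW a t v \<omega>) \<in> borel_measurable (lborel \<Otimes>\<^sub>M M)"
  unfolding FW_def by measurable

lemma FI_meas[measurable]: "(\<lambda>(s,\<omega>). FI a t s \<omega>) \<in> borel_measurable (lborel \<Otimes>\<^sub>M M)"
  unfolding FI_def by measurable

lemma FW_int: "\<omega> \<in> space M \<Longrightarrow> integrable lborel (\<lambda>v. FW a t v \<omega>)"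
proof -
  assume \<omega>: "\<omega> \<in> space M"
  have "continuous_on {0..t} (\<lambda>v. exp (a * v) * (Rp t \<omega> - Rp (t - v) \<omega>))"
    using continuous_on_subset[OF Rp_cont_shift[OF \<omega>, of t]]
    by (auto intro!: continuous_intros)
  from borel_integrable_compact[OF compact_Icc this] show ?thesis
    by (simp add: FW_def mult.assoc)
qed

lemma FI_int: "\<omega> \<in> space M \<Longrightarrow> integrable lborel (\<lambda>s. FI a t s \<omega>)"
proof -
  assume \<omega>: "\<omega> \<in> space M"
  have "continuous_on {0..t} (\<lambda>s. exp (a * (t - s)) * Rp s \<omega>)"
    using continuous_on_subset[OF Rp_cont[OF \<omega>]]
    by (auto intro!: continuous_intros)
  from borel_integrable_compact[OF compact_Icc this] show ?thesis
    by (simp add: FI_def)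
qed

lemma FW_supp: "v \<notin> {0..t} \<Longrightarrow> FW a t v \<omega> = 0"
  unfolding FW_def by simp

lemma FI_supp: "s \<notin> {0..t} \<Longrightarrow> FI a t s \<omega> = 0"
  unfolding FI_def by simp

lemma FW_bnd:
  assumes a: "a \<le> 0" and t: "t \<ge> 0"
  shows "(\<integral>\<^sup>+\<omega>. ennreal ((FW a t v \<omega>)\<^sup>2) \<partial>M) \<le> ennreal (t powr (2*H))"
proof (cases "v \<in> {0..t}")
  case True
  have "(\<integral>\<^sup>+\<omega>. ennreal ((FW a t v \<omega>)\<^sup>2) \<partial>M) \<le> (\<integral>\<^sup>+\<omega>. ennreal ((Rp t \<omega> - Rp (t-v) \<omega>)\<^sup>2) \<partial>M)"
  proof (rule nn_integral_mono)
    fix \<omega>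
    have e: "exp (a * v) \<le> 1" using a True by (simp add: mult_nonpos_nonneg)
    have "(FW a t v \<omega>)\<^sup>2 = (exp (a* v))\<^sup>2 * (Rp t \<omega> - Rp (t-v) \<omega>)\<^sup>2"
      using True by (simp add: FW_def power_mult_distrib)
    also have "\<dots> \<le> 1 * (Rp t \<omega> - Rp (t-v) \<omega>)\<^sup>2"
      by (rule mult_right_mono) (use e in \<open>auto simp: power_le_one\<close>)
    finally show "ennreal ((FW a t v \<omega>)\<^sup>2) \<le> ennreal ((Rp t \<omega> - Rp (t-v) \<omega>)\<^sup>2)"
      by (simp add: ennreal_leI)
  qed
  also have "\<dots> = ennreal (v powr (2*H))" using True nn_D_sq[of v t] by auto
  also have "\<dots> \<le> ennreal (t powr (2*H))"
    using True H1 by (intro ennreal_leI powr_mono2) auto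
  finally show ?thesis .
qed (simp add: FW_supp)

lemma FI_bnd:
  assumes a: "a \<ge> 0" and t: "t \<ge> 0"
  shows "(\<integral>\<^sup>+\<omega>. ennreal ((FI a t s \<omega>)\<^sup>2) \<partial>M) \<le> ennreal (exp (2*a*t) * t powr (2*H))"
proof (cases "s \<in> {0..t}")
  case True
  have "(\<integral>\<^sup>+\<omega>. ennreal ((FI a t s \<omega>)\<^sup>2) \<partial>M) \<le> (\<integral>\<^sup>+\<omega>. ennreal (exp (2*a*t) * (Rp s \<omega>)\<^sup>2) \<partial>M)"
  proof (rule nn_integral_mono)
    fix \<omega>
    have e: "(exp (a * (t - s)))\<^sup>2 \<le> exp (2*a*t)"
    proof -
      have "(exp (a * (t - s)))\<^sup>2 = exp (2 * (a * (t - s)))" by (simp add: exp_double[symmetric])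
      also have "\<dots> \<le> exp (2*a*t)" using a True by (auto simp: mult_left_mono)
      finally show ?thesis .
    qed
    have "(FI a t s \<omega>)\<^sup>2 = (exp (a * (t - s)))\<^sup>2 * (Rp s \<omega>)\<^sup>2"
      using True by (simp add: FI_def power_mult_distrib)
    also have "\<dots> \<le> exp (2*a*t) * (Rp s \<omega>)\<^sup>2"
      by (rule mult_right_mono) (use e in auto)
    finally show "ennreal ((FI a t s \<omega>)\<^sup>2) \<le> ennreal (exp (2*a*t) * (Rp s \<omega>)\<^sup>2)"
      by (simp add: ennreal_leI)
  qed
  also have "\<dots> = ennreal (exp (2*a*t)) * (\<integral>\<^sup>+\<omega>. ennreal ((Rp s \<omega>)\<^sup>2) \<partial>M)"
    by (subst nn_integral_cmult[symmetric]) (auto simp: ennreal_mult)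
  also have "\<dots> = ennreal (exp (2*a*t) * s powr (2*H))"
    using True by (simp add: nn_Rp_sq ennreal_mult)
  also have "\<dots> \<le> ennreal (exp (2*a*t) * t powr (2*H))"
    using True H1 by (intro ennreal_leI mult_left_mono powr_mono2) auto
  finally show ?thesis .
qed (simp add: FI_supp)

lemma path_int:
  assumes \<omega>: "\<omega> \<in> space M" and t: "t \<ge> 0"
  shows "integral {0..t} (\<lambda>s. exp (a*(t-s)) * R s \<omega>) = It a t \<omega>"
proof -
  have "integral {0..t} (\<lambda>s. exp (a*(t-s)) * R s \<omega>) = integral {0..t} (\<lambda>s. exp (a*(t-s)) * Rp s \<omega>)"
    by (rule integral_cong) (auto simp: Rp_def)
  also have "\<dots> = (LINT s:{0..t}|lborel. exp (a*(t-s)) * Rp s \<omega>)"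
  proof (rule set_borel_integral_eq_integral(2)[symmetric])
    show "set_integrable lborel {0..t} (\<lambda>s. exp (a*(t-s)) * Rp s \<omega>)"
      unfolding set_integrable_def using FI_int[OF \<omega>, of a t] by (simp add: FI_def)
  qed
  also have "\<dots> = It a t \<omega>"
    unfolding It_def FI_def set_lebesgue_integral_def by simp
  finally show ?thesis .
qed

lemma lin_sol_I:
  assumes \<omega>: "\<omega> \<in> space M" and t: "t \<ge> 0"
  shows "lin_sol R x0 a t \<omega> = exp (a*t) * x0 + Rp t \<omega> + a * It a t \<omega>"
  unfolding lin_sol_def path_int[OF assms] using t by (simp add: Rp_def)

lemma int_exp_Icc:
  fixes c t :: real
  assumes c: "c \<noteq> 0" and t: "t \<ge> 0"
  shows "(\<integral>v. indicator {0..t} v * exp (c * v) \<partial>lborel) = (exp (c*t) - 1) / c"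
proof -
  have "(\<integral>v. exp (c * v) * indicator {0..t} v \<partial>lborel) = exp (c*t) / c - exp (c*0) / c"
    by (rule integral_FTC_Icc_real[where F="\<lambda>v::real. exp ((c::real) * v) / c"])
       (use c t in \<open>auto intro!: derivative_eq_intros continuous_intros\<close>)
  then show ?thesis by (simp add: mult.commute diff_divide_distrib)
qed

lemma It_Wt:
  assumes \<omega>: "\<omega> \<in> space M" and t: "t \<ge> 0" and a: "a \<noteq> 0"
  shows "a * It a t \<omega> = (exp (a*t) - 1) * Rp t \<omega> - a * Wt a t \<omega>"
proof -
  have "It a t \<omega> = (\<integral>v. FI a t (t + (-1) * v) \<omega> \<partial>lborel)"
    unfolding It_def using lborel_integral_real_affine[of "-1" "\<lambda>s. FI a t s \<omega>" t] by simp
  also have "\<dots> = (\<integral>v. indicator {0..t} v * exp (a * v) * Rp t \<omega> - FW a t v \<omega> \<partial>lborel)"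
    by (rule Bochner_Integration.integral_cong) (auto simp: FI_def FW_def algebra_simps split: split_indicator)
  also have "\<dots> = (\<integral>v. indicator {0..t} v * exp (a * v) * Rp t \<omega> \<partial>lborel) - Wt a t \<omega>"
    unfolding Wt_def
  proof (rule Bochner_Integration.integral_diff)
    have "integrable lborel (\<lambda>v. indicator {0..t} v *\<^sub>R exp (a * v))"
      by (rule borel_integrable_compact) (auto intro!: continuous_intros)
    then show "integrable lborel (\<lambda>v. indicator {0..t} v * exp (a * v) * Rp t \<omega>)"
      by simp
    show "integrable lborel (\<lambda>v. FW a t v \<omega>)" by (rule FW_int[OF \<omega>])
  qed
  also have "(\<integral>v. indicator {0..t} v * exp (a * v) * Rp t \<omega> \<partial>lborel) = (exp (a*t) - 1) / a * Rp t \<omega>"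
    using int_exp_Icc[OF a t] by simp
  finally show ?thesis using a by (simp add: field_simps)
qed

lemma lin_sol_W:
  assumes \<omega>: "\<omega> \<in> space M" and t: "t \<ge> 0" and a: "a \<noteq> 0"
  shows "lin_sol R x0 a t \<omega> = exp (a*t) * x0 + exp (a*t) * Rp t \<omega> - a * Wt a t \<omega>"
  unfolding lin_sol_I[OF \<omega> t] It_Wt[OF assms] by (simp add: algebra_simps)


end

lemma (in prob_space) sq_expand:
  fixes X Y :: "'a \<Rightarrow> real" and c d e :: real
  assumes iX: "integrable M X" and iY: "integrable M Y"
    and iXX: "integrable M (\<lambda>\<omega>. X \<omega> * X \<omega>)" and iYY: "integrable M (\<lambda>\<omega>. Y \<omega> * Y \<omega>)"
    and iYX: "integrable M (\<lambda>\<omega>. Y \<omega> * X \<omega>)"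
  shows "integrable M (\<lambda>\<omega>. (c + d * X \<omega> + e * Y \<omega>)\<^sup>2)"
    and "(\<integral>\<omega>. (c + d * X \<omega> + e * Y \<omega>)\<^sup>2 \<partial>M) = c\<^sup>2 + d\<^sup>2 * (\<integral>\<omega>. X \<omega> * X \<omega> \<partial>M)
        + e\<^sup>2 * (\<integral>\<omega>. Y \<omega> * Y \<omega> \<partial>M) + 2*c*d * (\<integral>\<omega>. X \<omega> \<partial>M) + 2*c*e * (\<integral>\<omega>. Y \<omega> \<partial>M)
        + 2*d*e * (\<integral>\<omega>. Y \<omega> * X \<omega> \<partial>M)"
proof -
  have eq: "(\<lambda>\<omega>. (c + d * X \<omega> + e * Y \<omega>)\<^sup>2) = (\<lambda>\<omega>. c\<^sup>2 + (d\<^sup>2 * (X \<omega> * X \<omega>) + (e\<^sup>2 * (Y \<omega> * Y \<omega>)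
       + (2*c*d * X \<omega> + (2*c*e * Y \<omega> + 2*d*e * (Y \<omega> * X \<omega>))))))"
    by (auto simp: power2_eq_square algebra_simps)
  have i1: "integrable M (\<lambda>\<omega>. 2*c*e * Y \<omega> + 2*d*e * (Y \<omega> * X \<omega>))"
    using iY iYX by auto
  have i2: "integrable M (\<lambda>\<omega>. 2*c*d * X \<omega> + (2*c*e * Y \<omega> + 2*d*e * (Y \<omega> * X \<omega>)))"
    using iX i1 by auto
  have i3: "integrable M (\<lambda>\<omega>. e\<^sup>2 * (Y \<omega> * Y \<omega>) + (2*c*d * X \<omega> + (2*c*e * Y \<omega> + 2*d*e * (Y \<omega> * X \<omega>))))"
    using iYY i2 by auto
  have i4: "integrable M (\<lambda>\<omega>. d\<^sup>2 * (X \<omega> * X \<omega>) + (e\<^sup>2 * (Y \<omega> * Y \<omega>) + (2*c*d * X \<omega> + (2*c*e * Y \<omega> + 2*d*e * (Y \<omega> * X \<omega>)))))"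
    using iXX i3 by auto
  show "integrable M (\<lambda>\<omega>. (c + d * X \<omega> + e * Y \<omega>)\<^sup>2)"
    unfolding eq using i4 by auto
  show "(\<integral>\<omega>. (c + d * X \<omega> + e * Y \<omega>)\<^sup>2 \<partial>M) = c\<^sup>2 + d\<^sup>2 * (\<integral>\<omega>. X \<omega> * X \<omega> \<partial>M)
        + e\<^sup>2 * (\<integral>\<omega>. Y \<omega> * Y \<omega> \<partial>M) + 2*c*d * (\<integral>\<omega>. X \<omega> \<partial>M) + 2*c*e * (\<integral>\<omega>. Y \<omega> \<partial>M)
        + 2*d*e * (\<integral>\<omega>. Y \<omega> * X \<omega> \<partial>M)"
    unfolding eq
    using iX iY iXX iYY iYX i1 i2 i3 i4
    by (simp add: Bochner_Integration.integral_add prob_space)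
qed

lemma (in prob_space) lin_expand:
  fixes X Y :: "'a \<Rightarrow> real" and c d e :: real
  assumes iX: "integrable M X" and iXX: "integrable M (\<lambda>\<omega>. X \<omega> * X \<omega>)"
    and iYX: "integrable M (\<lambda>\<omega>. Y \<omega> * X \<omega>)"
  shows "integrable M (\<lambda>\<omega>. (c + d * X \<omega> + e * Y \<omega>) * X \<omega>)"
    and "(\<integral>\<omega>. (c + d * X \<omega> + e * Y \<omega>) * X \<omega> \<partial>M) = c * (\<integral>\<omega>. X \<omega> \<partial>M) + d * (\<integral>\<omega>. X \<omega> * X \<omega> \<partial>M)
        + e * (\<integral>\<omega>. Y \<omega> * X \<omega> \<partial>M)"
proof -
  have eq: "(\<lambda>\<omega>. (c + d * X \<omega> + e * Y \<omega>) * X \<omega>) = (\<lambda>\<omega>. c * X \<omega> + (d * (X \<omega> * X \<omega>) + e * (Y \<omega> * X \<omega>)))"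
    by (auto simp: algebra_simps)
  have i1: "integrable M (\<lambda>\<omega>. d * (X \<omega> * X \<omega>) + e * (Y \<omega> * X \<omega>))" using iXX iYX by auto
  show "integrable M (\<lambda>\<omega>. (c + d * X \<omega> + e * Y \<omega>) * X \<omega>)" unfolding eq using iX i1 by auto
  show "(\<integral>\<omega>. (c + d * X \<omega> + e * Y \<omega>) * X \<omega> \<partial>M) = c * (\<integral>\<omega>. X \<omega> \<partial>M) + d * (\<integral>\<omega>. X \<omega> * X \<omega> \<partial>M)
        + e * (\<integral>\<omega>. Y \<omega> * X \<omega> \<partial>M)"
    unfolding eq using iX iXX iYX i1 by (simp add: Bochner_Integration.integral_add)
qed

lemma (in prob_space) cauchy_schwarz:
  fixes X Z :: "'a \<Rightarrow> real"
  assumes iZZ: "integrable M (\<lambda>\<omega>. (Z \<omega>)\<^sup>2)" and iXX: "integrable M (\<lambda>\<omega>. X \<omega> * X \<omega>)"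
    and iZX: "integrable M (\<lambda>\<omega>. Z \<omega> * X \<omega>)" and pos: "(\<integral>\<omega>. X \<omega> * X \<omega> \<partial>M) > 0"
  shows "(\<integral>\<omega>. Z \<omega> * X \<omega> \<partial>M)\<^sup>2 \<le> (\<integral>\<omega>. (Z \<omega>)\<^sup>2 \<partial>M) * (\<integral>\<omega>. X \<omega> * X \<omega> \<partial>M)"
proof -
  define A where "A = (\<integral>\<omega>. (Z \<omega>)\<^sup>2 \<partial>M)"
  define B where "B = (\<integral>\<omega>. Z \<omega> * X \<omega> \<partial>M)"
  define D where "D = (\<integral>\<omega>. X \<omega> * X \<omega> \<partial>M)"
  define l where "l = B / D"
  have eq: "(\<lambda>\<omega>. (Z \<omega> - l * X \<omega>)\<^sup>2) = (\<lambda>\<omega>. (Z \<omega>)\<^sup>2 + ((-2*l) * (Z \<omega> * X \<omega>) + l\<^sup>2 * (X \<omega> * X \<omega>)))"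
    by (auto simp: power2_eq_square algebra_simps)
  have i1: "integrable M (\<lambda>\<omega>. (-2*l) * (Z \<omega> * X \<omega>) + l\<^sup>2 * (X \<omega> * X \<omega>))" using iZX iXX by auto
  have "0 \<le> (\<integral>\<omega>. (Z \<omega> - l * X \<omega>)\<^sup>2 \<partial>M)" by simp
  also have "\<dots> = A - 2 * l * B + l\<^sup>2 * D"
    unfolding eq A_def B_def D_def using iZZ iZX iXX i1 by (simp add: Bochner_Integration.integral_add)
  also have "\<dots> = A - B\<^sup>2 / D"
    unfolding l_def using pos D_def by (simp add: field_simps power2_eq_square)
  finally have "B\<^sup>2 / D \<le> A" by simp
  then show ?thesis using pos unfolding A_def B_def D_def by (simp add: field_simps)
qed

context RS
begin

definition Kt :: "real \<Rightarrow> real \<Rightarrow> real" where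
  "Kt a t = (\<integral>v. indicator {0..t} v * exp (a * v) * (t powr (2*H) - rosen_cov H (t - v) t) \<partial>lborel)"

definition Jt :: "real \<Rightarrow> real \<Rightarrow> real" where
  "Jt a t = (\<integral>z. kJt a (2*H) t z \<partial>(lborel \<Otimes>\<^sub>M lborel))"

lemma sfM: "sigma_finite_measure M" by (rule sigma_finite_measure_axioms)

lemma C_bnd1: "(\<integral>\<^sup>+\<omega>. ennreal ((1::real)\<^sup>2) \<partial>M) \<le> ennreal (C + 1)" if "C \<ge> 0" for C
  using that by (simp add: emeasure_space_1)

lemma W_moments:
  assumes a: "a < 0" and t: "t \<ge> 0"
  shows "integrable M (Wt a t)"
    and "(\<integral>\<omega>. Wt a t \<omega> \<partial>M) = 0"
    and "integrable M (\<lambda>\<omega>. Wt a t \<omega> * Rp t \<omega>)"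
    and "(\<integral>\<omega>. Wt a t \<omega> * Rp t \<omega> \<partial>M) = Kt a t"
    and "integrable M (\<lambda>\<omega>. Wt a t \<omega> * Wt a t \<omega>)"
    and "(\<integral>\<omega>. Wt a t \<omega> * Wt a t \<omega> \<partial>M) = Jt a t"
proof -
  define C where "C = t powr (2*H) + 1"
  have C0: "C \<ge> 0" unfolding C_def by simp
  have bF: "(\<integral>\<^sup>+\<omega>. ennreal ((FW a t v \<omega>)\<^sup>2) \<partial>M) \<le> ennreal C" for v
    using FW_bnd[of a t v] a t unfolding C_def by (meson ennreal_leI less_add_one order.strict_implies_order order_trans)
  have b1: "(\<integral>\<^sup>+\<omega>. ennreal (((\<lambda>_. 1::real) \<omega>)\<^sup>2) \<partial>M) \<le> ennreal C"
    unfolding C_def by (simp add: emeasure_space_1)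
  have bR: "(\<integral>\<^sup>+\<omega>. ennreal ((Rp t \<omega>)\<^sup>2) \<partial>M) \<le> ennreal C"
    unfolding C_def nn_Rp_sq using t by simp
  note A1 = fub1x[where X="\<lambda>_. 1::real", OF sfM FW_meas borel_measurable_const FW_supp bF b1, simplified]
  note A2 = fub1x[OF sfM FW_meas Rp_meas FW_supp bF bR]
  note A3 = fub2[OF sfM FW_meas FW_meas FW_int FW_int FW_supp FW_supp bF bF]
  show "integrable M (Wt a t)" using A1(1) unfolding Wt_def by simp
  have "(\<integral>\<omega>. Wt a t \<omega> \<partial>M) = (\<integral>v. (\<integral>\<omega>. FW a t v \<omega> \<partial>M) \<partial>lborel)"
    using A1(2) unfolding Wt_def by simp
  also have "\<dots> = (\<integral>v. (0::real) \<partial>(lborel::real measure))"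
  proof (rule Bochner_Integration.integral_cong[OF refl])
    fix v :: real
    have "(\<integral>\<omega>. FW a t v \<omega> \<partial>M) = indicator {0..t} v * exp (a * v) * ((\<integral>\<omega>. Rp t \<omega> \<partial>M) - (\<integral>\<omega>. Rp (t - v) \<omega> \<partial>M))"
      unfolding FW_def by (simp add: Bochner_Integration.integral_diff Rp_int)
    then show "(\<integral>\<omega>. FW a t v \<omega> \<partial>M) = 0" by (simp add: Rp_mean)
  qed
  finally show "(\<integral>\<omega>. Wt a t \<omega> \<partial>M) = 0" by simp
  show "integrable M (\<lambda>\<omega>. Wt a t \<omega> * Rp t \<omega>)" using A2(1) unfolding Wt_def .
  have "(\<integral>\<omega>. Wt a t \<omega> * Rp t \<omega> \<partial>M) = (\<integral>v. (\<integral>\<omega>. FW a t v \<omega> * Rp t \<omega> \<partial>M) \<partial>lborel)"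
    using A2(2) unfolding Wt_def .
  also have "\<dots> = Kt a t"
    unfolding Kt_def
  proof (rule Bochner_Integration.integral_cong[OF refl])
    fix v :: real
    show "(\<integral>\<omega>. FW a t v \<omega> * Rp t \<omega> \<partial>M) = indicator {0..t} v * exp (a * v) * (t powr (2*H) - rosen_cov H (t - v) t)"
    proof (cases "v \<in> {0..t}")
      case True
      have "(\<integral>\<omega>. FW a t v \<omega> * Rp t \<omega> \<partial>M) = exp (a * v) * (\<integral>\<omega>. (Rp t \<omega> - Rp (t - v) \<omega>) * Rp t \<omega> \<partial>M)"
        using True unfolding FW_def by (simp add: mult.assoc)
      then show ?thesis using True DR[of v t] by simp
    qed (simp add: FW_def)
  qed
  finally show "(\<integral>\<omega>. Wt a t \<omega> * Rp t \<omega> \<partial>M) = Kt a t" .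
  show "integrable M (\<lambda>\<omega>. Wt a t \<omega> * Wt a t \<omega>)" using A3(1) unfolding Wt_def .
  have "(\<integral>\<omega>. Wt a t \<omega> * Wt a t \<omega> \<partial>M) = (\<integral>z. (\<integral>\<omega>. FW a t (fst z) \<omega> * FW a t (snd z) \<omega> \<partial>M) \<partial>(lborel \<Otimes>\<^sub>M lborel))"
    using A3(2) unfolding Wt_def .
  also have "\<dots> = Jt a t"
    unfolding Jt_def
  proof (rule Bochner_Integration.integral_cong[OF refl])
    fix z :: "real \<times> real"
    obtain v w where z: "z = (v, w)" by (cases z)
    show "(\<integral>\<omega>. FW a t (fst z) \<omega> * FW a t (snd z) \<omega> \<partial>M) = kJt a (2*H) t z"
    proof (cases "v \<in> {0..t} \<and> w \<in> {0..t}")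
      case True
      have "(\<integral>\<omega>. FW a t v \<omega> * FW a t w \<omega> \<partial>M) = exp (a * v) * exp (a * w) * (\<integral>\<omega>. (Rp t \<omega> - Rp (t - v) \<omega>) * (Rp t \<omega> - Rp (t - w) \<omega>) \<partial>M)"
      proof -
        have "(\<lambda>\<omega>. FW a t v \<omega> * FW a t w \<omega>) = (\<lambda>\<omega>. (exp (a * v) * exp (a * w)) * ((Rp t \<omega> - Rp (t - v) \<omega>) * (Rp t \<omega> - Rp (t - w) \<omega>)))"
          using True by (intro ext) (simp add: FW_def mult_ac)
        then show ?thesis by simp
      qed
      also have "\<dots> = exp (a * v) * exp (a * w) * ((v powr (2*H) + w powr (2*H) - \<bar>v - w\<bar> powr (2*H)) / 2)"
        using True Dcov[of v t w] by simp
      also have "\<dots> = kJt a (2*H) t z"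
        using True unfolding z kJt_def kJ_def by (simp add: exp_add distrib_left)
      finally show ?thesis unfolding z by simp
    next
      case False
      then show ?thesis unfolding z kJt_def FW_def by auto
    qed
  qed
  finally show "(\<integral>\<omega>. Wt a t \<omega> * Wt a t \<omega> \<partial>M) = Jt a t" .
qed

end




context RS
begin

lemma Rp_t_sq: "t \<ge> 0 \<Longrightarrow> (\<integral>\<omega>. Rp t \<omega> * Rp t \<omega> \<partial>M) = t powr (2*H)"
  using Rp_cov[of t t] by (simp add: rosen_cov_diag)

definition Lt :: "real \<Rightarrow> real \<Rightarrow> real" where
  "Lt a t = (\<integral>s. indicator {0..t} s * (exp (a * (t - s)) * rosen_cov H s t) \<partial>lborel)"

lemma Lt_nonneg: "t \<ge> 0 \<Longrightarrow> 0 \<le> Lt a t"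
  unfolding Lt_def
proof (rule integral_nonneg_AE, rule AE_I2)
  fix s assume t: "t \<ge> 0"
  show "0 \<le> indicator {0..t} s * (exp (a * (t - s)) * rosen_cov H s t)"
  proof (cases "s \<in> {0..t}")
    case True
    then have "\<bar>s - t\<bar> powr (2*H) \<le> s powr (2*H) + t powr (2*H)"
      using cov_nonneg[of s t "2*H"] H1 t by auto
    then have "0 \<le> rosen_cov H s t" unfolding rosen_cov_def by simp
    then show ?thesis using True by simp
  qed simp
qed

lemma I_moments:
  assumes a: "a \<ge> 0" and t: "t \<ge> 0"
  shows "integrable M (It a t)"
    and "integrable M (\<lambda>\<omega>. It a t \<omega> * Rp t \<omega>)"
    and "(\<integral>\<omega>. It a t \<omega> * Rp t \<omega> \<partial>M) = Lt a t"
    and "integrable M (\<lambda>\<omega>. It a t \<omega> * It a t \<omega>)"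
proof -
  define C where "C = exp (2*a*t) * t powr (2*H) + t powr (2*H) + 1"
  have bF: "(\<integral>\<^sup>+\<omega>. ennreal ((FI a t s \<omega>)\<^sup>2) \<partial>M) \<le> ennreal C" for s
  proof -
    have "exp (2*a*t) * t powr (2*H) \<le> C" unfolding C_def by simp
    then show ?thesis using FI_bnd[OF a t, of s] by (meson ennreal_leI order_trans)
  qed
  have b1: "(\<integral>\<^sup>+\<omega>. ennreal (((\<lambda>_. 1::real) \<omega>)\<^sup>2) \<partial>M) \<le> ennreal C"
    unfolding C_def by (simp add: emeasure_space_1 add_increasing)
  have bR: "(\<integral>\<^sup>+\<omega>. ennreal ((Rp t \<omega>)\<^sup>2) \<partial>M) \<le> ennreal C"
    unfolding C_def nn_Rp_sq using t by (simp add: add_increasing)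
  note A1 = fub1x[where X="\<lambda>_. 1::real", OF sfM FI_meas borel_measurable_const FI_supp bF b1, simplified]
  note A2 = fub1x[OF sfM FI_meas Rp_meas FI_supp bF bR]
  note A3 = fub2[OF sfM FI_meas FI_meas FI_int FI_int FI_supp FI_supp bF bF]
  show "integrable M (It a t)" using A1(1) unfolding It_def by simp
  show "integrable M (\<lambda>\<omega>. It a t \<omega> * Rp t \<omega>)" using A2(1) unfolding It_def .
  have "(\<integral>\<omega>. It a t \<omega> * Rp t \<omega> \<partial>M) = (\<integral>s. (\<integral>\<omega>. FI a t s \<omega> * Rp t \<omega> \<partial>M) \<partial>lborel)"
    using A2(2) unfolding It_def .
  also have "\<dots> = Lt a t"
    unfolding Lt_def
  proof (rule Bochner_Integration.integral_cong[OF refl])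
    fix s :: real
    show "(\<integral>\<omega>. FI a t s \<omega> * Rp t \<omega> \<partial>M) = indicator {0..t} s * (exp (a * (t - s)) * rosen_cov H s t)"
    proof (cases "s \<in> {0..t}")
      case True
      have "(\<lambda>\<omega>. FI a t s \<omega> * Rp t \<omega>) = (\<lambda>\<omega>. exp (a * (t - s)) * (Rp s \<omega> * Rp t \<omega>))"
        using True by (intro ext) (simp add: FI_def mult_ac)
      then have "(\<integral>\<omega>. FI a t s \<omega> * Rp t \<omega> \<partial>M) = exp (a * (t - s)) * rosen_cov H (max s 0) (max t 0)"
        by (simp add: Rp_cov)
      then show ?thesis using True t by simp
    qed (simp add: FI_def)
  qed
  finally show "(\<integral>\<omega>. It a t \<omega> * Rp t \<omega> \<partial>M) = Lt a t" .
  show "integrable M (\<lambda>\<omega>. It a t \<omega> * It a t \<omega>)" using A3(1) unfolding It_def .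
qed

definition mneg :: "real \<Rightarrow> real \<Rightarrow> real \<Rightarrow> real" where
  "mneg a x0 t = (exp (a*t) * x0)\<^sup>2 + (exp (a*t))\<^sup>2 * t powr (2*H) + a\<^sup>2 * Jt a t + 2 * exp (a*t) * (-a) * Kt a t"

lemma moment_neg:
  assumes a: "a < 0" and t: "t \<ge> 0"
  shows "integrable M (\<lambda>\<omega>. (lin_sol R x0 a t \<omega>)\<^sup>2)"
    and "(\<integral>\<omega>. (lin_sol R x0 a t \<omega>)\<^sup>2 \<partial>M) = mneg a x0 t"
proof -
  note W = W_moments[OF a t]
  note S = sq_expand[OF Rp_int[of t] W(1) Rp_prod_int[of t t] W(5) W(3), of "exp (a*t) * x0" "exp (a*t)" "-a"]
  have eq: "\<And>\<omega>. \<omega> \<in> space M \<Longrightarrow> (lin_sol R x0 a t \<omega>)\<^sup>2 = (exp (a*t) * x0 + exp (a*t) * Rp t \<omega> + (-a) * Wt a t \<omega>)\<^sup>2"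
    using lin_sol_W[OF _ t, of _ a x0] a by simp
  show "integrable M (\<lambda>\<omega>. (lin_sol R x0 a t \<omega>)\<^sup>2)"
    using S(1) by (subst Bochner_Integration.integrable_cong[OF refl eq]) auto
  have "(\<integral>\<omega>. (lin_sol R x0 a t \<omega>)\<^sup>2 \<partial>M) = (\<integral>\<omega>. (exp (a*t) * x0 + exp (a*t) * Rp t \<omega> + (-a) * Wt a t \<omega>)\<^sup>2 \<partial>M)"
    by (rule Bochner_Integration.integral_cong[OF refl eq])
  also have "\<dots> = mneg a x0 t"
    unfolding S(2) W(2) W(4) W(6) Rp_mean Rp_t_sq[OF t] mneg_def by simp
  finally show "(\<integral>\<omega>. (lin_sol R x0 a t \<omega>)\<^sup>2 \<partial>M) = mneg a x0 t" .
qed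

lemma nn_moment_neg:
  assumes a: "a < 0" and t: "t \<ge> 0"
  shows "(\<integral>\<^sup>+\<omega>. ennreal ((lin_sol R x0 a t \<omega>)\<^sup>2) \<partial>M) = ennreal (mneg a x0 t)"
  using nn_integral_eq_integral[OF moment_neg(1)[OF a t]] moment_neg(2)[OF a t] by simp

lemma moment_nonneg:
  assumes a: "a \<ge> 0" and t: "t > 0"
  shows "integrable M (\<lambda>\<omega>. (lin_sol R x0 a t \<omega>)\<^sup>2)"
    and "t powr (2*H) \<le> (\<integral>\<omega>. (lin_sol R x0 a t \<omega>)\<^sup>2 \<partial>M)"
proof -
  have t0: "t \<ge> 0" using t by simp
  note I = I_moments[OF a t0]
  note S = sq_expand[OF Rp_int[of t] I(1) Rp_prod_int[of t t] I(4) I(2), of "exp (a*t) * x0" 1 a]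
  note L = lin_expand[OF Rp_int[of t] Rp_prod_int[of t t] I(2), of "exp (a*t) * x0" 1 a]
  have eqx: "\<And>\<omega>. \<omega> \<in> space M \<Longrightarrow> lin_sol R x0 a t \<omega> = exp (a*t) * x0 + 1 * Rp t \<omega> + a * It a t \<omega>"
    using lin_sol_I[OF _ t0, of _ x0 a] by simp
  have eq: "\<And>\<omega>. \<omega> \<in> space M \<Longrightarrow> (lin_sol R x0 a t \<omega>)\<^sup>2 = (exp (a*t) * x0 + 1 * Rp t \<omega> + a * It a t \<omega>)\<^sup>2"
    using eqx by simp
  have eq2: "\<And>\<omega>. \<omega> \<in> space M \<Longrightarrow> lin_sol R x0 a t \<omega> * Rp t \<omega> = (exp (a*t) * x0 + 1 * Rp t \<omega> + a * It a t \<omega>) * Rp t \<omega>"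
    using eqx by simp
  show i1: "integrable M (\<lambda>\<omega>. (lin_sol R x0 a t \<omega>)\<^sup>2)"
    using S(1) by (subst Bochner_Integration.integrable_cong[OF refl eq]) auto
  have i2: "integrable M (\<lambda>\<omega>. lin_sol R x0 a t \<omega> * Rp t \<omega>)"
    using L(1) by (subst Bochner_Integration.integrable_cong[OF refl eq2]) auto
  have "(\<integral>\<omega>. lin_sol R x0 a t \<omega> * Rp t \<omega> \<partial>M) = (\<integral>\<omega>. (exp (a*t) * x0 + 1 * Rp t \<omega> + a * It a t \<omega>) * Rp t \<omega> \<partial>M)"
    by (rule Bochner_Integration.integral_cong[OF refl eq2])
  also have "\<dots> = t powr (2*H) + a * Lt a t"
    unfolding L(2) I(3) Rp_mean Rp_t_sq[OF t0] by simp
  finally have exr: "(\<integral>\<omega>. lin_sol R x0 a t \<omega> * Rp t \<omega> \<partial>M) = t powr (2*H) + a * Lt a t" .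
  have ge: "t powr (2*H) \<le> (\<integral>\<omega>. lin_sol R x0 a t \<omega> * Rp t \<omega> \<partial>M)"
    unfolding exr using a Lt_nonneg[OF t0, of a] by simp
  have pos: "(\<integral>\<omega>. Rp t \<omega> * Rp t \<omega> \<partial>M) > 0" unfolding Rp_t_sq[OF t0] using t by simp
  have cs: "(\<integral>\<omega>. lin_sol R x0 a t \<omega> * Rp t \<omega> \<partial>M)\<^sup>2 \<le> (\<integral>\<omega>. (lin_sol R x0 a t \<omega>)\<^sup>2 \<partial>M) * t powr (2*H)"
    using cauchy_schwarz[OF i1 Rp_prod_int[of t t] i2 pos] unfolding Rp_t_sq[OF t0] .
  have tp: "t powr (2*H) > 0" using t by simp
  have "(t powr (2*H))\<^sup>2 \<le> (\<integral>\<omega>. lin_sol R x0 a t \<omega> * Rp t \<omega> \<partial>M)\<^sup>2"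
    using ge tp by (intro power_mono) auto
  with cs have "(t powr (2*H)) * (t powr (2*H)) \<le> (\<integral>\<omega>. (lin_sol R x0 a t \<omega>)\<^sup>2 \<partial>M) * t powr (2*H)"
    by (simp add: power2_eq_square)
  then show "t powr (2*H) \<le> (\<integral>\<omega>. (lin_sol R x0 a t \<omega>)\<^sup>2 \<partial>M)"
    using tp by (simp add: mult_le_cancel_right)
qed

lemma nn_moment_nonneg:
  assumes a: "a \<ge> 0" and t: "t > 0"
  shows "ennreal (t powr (2*H)) \<le> (\<integral>\<^sup>+\<omega>. ennreal ((lin_sol R x0 a t \<omega>)\<^sup>2) \<partial>M)"
  using nn_integral_eq_integral[OF moment_nonneg(1)[OF a t]] moment_nonneg(2)[OF a t, of x0]
  by (simp add: ennreal_leI)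

end




lemma lim_exp_pow:
  fixes a p :: real assumes a: "a < 0"
  shows "((\<lambda>t. exp (a*t) * t powr p) \<longlongrightarrow> 0) at_top"
  using a by real_asymp

lemma lim_exp:
  fixes a :: real assumes a: "a < 0"
  shows "((\<lambda>t. exp (a*t)) \<longlongrightarrow> 0) at_top"
  using a by real_asymp

lemma cesaro:
  fixes m :: "real \<Rightarrow> real" and L :: real
  assumes lim: "(m \<longlongrightarrow> L) at_top" and L: "L > 0"
    and bnd: "\<And>T0. \<exists>B. \<forall>t\<in>{0..T0}. m t \<le> B"
  shows "Limsup at_top (\<lambda>T. ennreal (1/T) * (\<integral>\<^sup>+t. ennreal (m t) * indicator {0..T} t \<partial>lborel)) = ennreal L"
proof -
  define h where "h T = ennreal (1/T) * (\<integral>\<^sup>+t. ennreal (m t) * indicator {0..T} t \<partial>lborel)" for T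
  have up: "Limsup at_top h \<le> ennreal L"
  proof (rule ennreal_le_epsilon)
    fix e :: real assume e: "0 < e"
    have "eventually (\<lambda>t. m t < L + e/2) at_top"
      using order_tendstoD(2)[OF lim, of "L + e/2"] e by simp
    then obtain N where N: "\<And>t. t \<ge> N \<Longrightarrow> m t < L + e/2" by (auto simp: eventually_at_top_linorder)
    define T0 where "T0 = max N 0"
    have T0: "T0 \<ge> 0" "\<And>t. t \<ge> T0 \<Longrightarrow> m t \<le> L + e/2" using N unfolding T0_def by force+
    obtain B where B: "\<forall>t\<in>{0..T0}. m t \<le> B" using bnd by blast
    define B' where "B' = max B 0"
    have B': "B' \<ge> 0" "\<And>t. t \<in> {0..T0} \<Longrightarrow> m t \<le> B'" using B unfolding B'_def by force+
    have "eventually (\<lambda>T. h T \<le> ennreal L + ennreal e) at_top"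
      using eventually_ge_at_top[of "max (T0 + 1) (2 * B' * T0 / e + 1)"]
    proof eventually_elim
      case (elim T)
      have T: "T \<ge> T0 + 1" "T \<ge> 2 * B' * T0 / e + 1" using elim by auto
      have Tpos: "T > 0" using T T0 by linarith
      have "(\<integral>\<^sup>+t. ennreal (m t) * indicator {0..T} t \<partial>lborel)
          \<le> (\<integral>\<^sup>+t. ennreal B' * indicator {0..T0} t + ennreal (L + e/2) * indicator {0..T} t \<partial>lborel)"
      proof (rule nn_integral_mono)
        fix t
        show "ennreal (m t) * indicator {0..T} t \<le> ennreal B' * indicator {0..T0} t + ennreal (L + e/2) * indicator {0..T} t"
        proof (cases "t \<in> {0..T}")
          case True
          show ?thesis
          proof (cases "t \<le> T0")
            case True2: True
            then have "ennreal (m t) \<le> ennreal B'" using B'(2)[of t] True by (intro ennreal_leI) auto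
            then show ?thesis using True True2 by (auto simp: add_increasing2)
          next
            case False
            then have "ennreal (m t) \<le> ennreal (L + e/2)" using T0(2)[of t] by (intro ennreal_leI) auto
            then show ?thesis using True by (auto intro: add_increasing)
          qed
        qed simp
      qed
      also have "\<dots> = ennreal B' * emeasure lborel {0..T0} + ennreal (L + e/2) * emeasure lborel {0..T}"
        by (subst nn_integral_add) (auto simp: nn_integral_cmult_indicator)
      also have "\<dots> = ennreal (B' * T0 + (L + e/2) * T)"
        using T0 Tpos B' L e by (simp add: ennreal_mult[symmetric] ennreal_plus[symmetric] del: ennreal_plus)
      finally have I: "(\<integral>\<^sup>+t. ennreal (m t) * indicator {0..T} t \<partial>lborel) \<le> ennreal (B' * T0 + (L + e/2) * T)" .
      have "h T \<le> ennreal (1/T) * ennreal (B' * T0 + (L + e/2) * T)"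
        unfolding h_def by (rule mult_left_mono[OF I]) simp
      also have "\<dots> = ennreal ((B' * T0 + (L + e/2) * T) / T)"
      proof -
        have "0 \<le> B' * T0 + (L + e/2) * T" using Tpos B' T0 L e by simp
        then show ?thesis using Tpos by (subst ennreal_mult[symmetric]) auto
      qed
      finally have h1: "h T \<le> ennreal ((B' * T0 + (L + e/2) * T) / T)" .
      have bd: "B' * T0 / T \<le> e/2"
      proof -
        have "2 * B' * T0 / e \<le> T" using T by linarith
        then have "2 * B' * T0 \<le> T * e" using e by (simp add: divide_le_eq)
        then show ?thesis using Tpos by (simp add: divide_le_eq field_simps)
      qed
      have eqT: "(B' * T0 + (L + e/2) * T) / T = B' * T0 / T + (L + e/2)"
        using Tpos by (simp add: field_simps)
      have "ennreal ((B' * T0 + (L + e/2) * T) / T) \<le> ennreal (L + e)"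
        unfolding eqT using bd by (intro ennreal_leI) linarith
      also have "\<dots> = ennreal L + ennreal e" using L e by (simp add: ennreal_plus)
      finally have h2: "ennreal ((B' * T0 + (L + e/2) * T) / T) \<le> ennreal L + ennreal e" .
      from h1 h2 show "h T \<le> ennreal L + ennreal e" by (rule order_trans)
    qed
    then show "Limsup at_top h \<le> ennreal L + ennreal e" by (rule Limsup_bounded)
  qed
  have low: "ennreal L \<le> Limsup at_top h"
  proof (rule ccontr)
    assume "\<not> ennreal L \<le> Limsup at_top h"
    then have lt: "Limsup at_top h < ennreal L" by simp
    then obtain z where z: "Limsup at_top h = ennreal z" "0 \<le> z"
      by (cases "Limsup at_top h" rule: ennreal_cases) auto
    have zL: "z < L" using lt z L by (simp add: ennreal_less_iff)
    define y where "y = (z + L) / 2"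
    define l1 where "l1 = (y + L) / 2"
    have yl: "z < y" "y < l1" "l1 < L" "0 \<le> y" using zL z unfolding y_def l1_def by auto
    have "eventually (\<lambda>t. l1 < m t) at_top"
      using order_tendstoD(1)[OF lim, of l1] yl by simp
    then obtain N where N: "\<And>t. t \<ge> N \<Longrightarrow> l1 < m t" by (auto simp: eventually_at_top_linorder)
    define T0 where "T0 = max N 0"
    have T0: "T0 \<ge> 0" "\<And>t. t \<ge> T0 \<Longrightarrow> l1 \<le> m t" using N unfolding T0_def by (force intro: less_imp_le)+
    have "eventually (\<lambda>T. ennreal y \<le> h T) at_top"
      using eventually_ge_at_top[of "max (T0 + 1) (l1 * T0 / (l1 - y) + 1)"]
    proof eventually_elim
      case (elim T)
      have T: "T \<ge> T0 + 1" "T \<ge> l1 * T0 / (l1 - y) + 1" using elim by auto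
      have Tpos: "T > 0" using T T0 by linarith
      have "ennreal (l1 * (T - T0)) = ennreal l1 * emeasure lborel {T0..T}"
        using T T0 yl by (simp add: ennreal_mult)
      also have "\<dots> = (\<integral>\<^sup>+t. ennreal l1 * indicator {T0..T} t \<partial>lborel)"
        by (simp add: nn_integral_cmult_indicator)
      also have "\<dots> \<le> (\<integral>\<^sup>+t. ennreal (m t) * indicator {0..T} t \<partial>lborel)"
      proof (rule nn_integral_mono)
        fix t
        show "ennreal l1 * indicator {T0..T} t \<le> ennreal (m t) * indicator {0..T} t"
        proof (cases "t \<in> {T0..T}")
          case True
          then have "ennreal l1 \<le> ennreal (m t)" using T0(2)[of t] by (intro ennreal_leI) auto
          then show ?thesis using True T0 by auto
        qed simp
      qed
      finally have I: "ennreal (l1 * (T - T0)) \<le> (\<integral>\<^sup>+t. ennreal (m t) * indicator {0..T} t \<partial>lborel)" .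
      have "y \<le> l1 * (T - T0) / T"
      proof -
        have "l1 * T0 / (l1 - y) \<le> T" using T by linarith
        then have "l1 * T0 \<le> T * (l1 - y)" using yl by (simp add: divide_le_eq)
        then have "y * T \<le> l1 * (T - T0)" by (simp add: algebra_simps)
        then show ?thesis using Tpos by (simp add: le_divide_eq)
      qed
      then have "ennreal y \<le> ennreal (l1 * (T - T0) / T)" by (rule ennreal_leI)
      also have "\<dots> = ennreal (1/T) * ennreal (l1 * (T - T0))"
        using Tpos T yl T0 by (simp add: ennreal_mult[symmetric])
      also have "\<dots> \<le> h T" unfolding h_def by (rule mult_left_mono[OF I]) simp
      finally show ?case .
    qed
    then have "ennreal y \<le> Limsup at_top h" by (intro le_Limsup) auto
    then show False using z yl by (simp add: ennreal_le_iff)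
  qed
  show ?thesis using up low unfolding h_def by (rule antisym)
qed

context RS
begin

lemma Kt_bounds:
  assumes t: "t \<ge> 0" and a: "a \<le> 0"
  shows "0 \<le> Kt a t" "Kt a t \<le> t powr (2*H) * t"
proof -
  define f where "f = (\<lambda>v. indicator {0..t} v * exp (a * v) * (t powr (2*H) - rosen_cov H (t - v) t))"
  have pt: "0 \<le> f v \<and> f v \<le> indicator {0..t} v * t powr (2*H)" for v
  proof (cases "v \<in> {0..t}")
    case True
    have e: "0 < exp (a * v)" "exp (a * v) \<le> 1" using True a by (auto simp: mult_nonpos_nonneg)
    have p1: "(t - v) powr (2*H) \<le> t powr (2*H)" using True H1 by (intro powr_mono2) auto
    have p2: "v powr (2*H) \<le> t powr (2*H)" using True H1 by (intro powr_mono2) auto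
    have abs1: "\<bar>t - v - t\<bar> = v" using True by auto
    have q: "t powr (2*H) - rosen_cov H (t - v) t = (t powr (2*H) - (t - v) powr (2*H) + v powr (2*H)) / 2"
      unfolding rosen_cov_def abs1 by (simp add: field_simps)
    have q0: "0 \<le> t powr (2*H) - rosen_cov H (t - v) t" "t powr (2*H) - rosen_cov H (t - v) t \<le> t powr (2*H)"
    proof -
      have z1: "0 \<le> (t-v) powr (2*H)" "0 \<le> v powr (2*H)" by simp_all
      have x1: "0 \<le> t powr (2*H) - (t - v) powr (2*H) + v powr (2*H)" using p1 z1 by linarith
      have x2: "t powr (2*H) - (t - v) powr (2*H) + v powr (2*H) \<le> 2 * t powr (2*H)" using p2 z1 by linarith
      show "0 \<le> t powr (2*H) - rosen_cov H (t - v) t" unfolding q using x1 by simp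
      show "t powr (2*H) - rosen_cov H (t - v) t \<le> t powr (2*H)" unfolding q using x2 by simp
    qed
    have "f v = exp (a * v) * (t powr (2*H) - rosen_cov H (t - v) t)" using True by (simp add: f_def)
    moreover have "exp (a * v) * (t powr (2*H) - rosen_cov H (t - v) t) \<le> 1 * t powr (2*H)"
      by (rule mult_mono) (use e q0 in auto)
    ultimately show ?thesis using True e q0 by simp
  qed (simp add: f_def)
  have [measurable]: "f \<in> borel_measurable lborel" unfolding f_def rosen_cov_def by measurable
  have ib: "integrable lborel (\<lambda>v. indicator {0..t} v * t powr (2*H))"
    using integrable_real_indicator[of "{0..t}" lborel] by (simp add: emeasure_lborel_Icc_eq)
  have fi: "integrable lborel f"
    by (rule Bochner_Integration.integrable_bound[OF ib]) (use pt in \<open>auto intro!: AE_I2\<close>)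
  show "0 \<le> Kt a t" unfolding Kt_def f_def[symmetric] using pt by (intro integral_nonneg_AE) auto
  have "Kt a t \<le> (\<integral>v. indicator {0..t} v * t powr (2*H) \<partial>lborel)"
    unfolding Kt_def f_def[symmetric] using pt by (intro integral_mono[OF fi ib]) auto
  also have "\<dots> = t powr (2*H) * t" using t by (simp add: mult.commute)
  finally show "Kt a t \<le> t powr (2*H) * t" .
qed

definition Lval :: "real \<Rightarrow> real" where
  "Lval a = Gamma (2*H + 1) / (2 * (-a) powr (2*H))"

lemma Lval_eq: "a < 0 \<Longrightarrow> a\<^sup>2 * (Gamma (2*H+1) / (-a) powr (2*H+1) / (-2*a)) = Lval a"
  unfolding Lval_def by (simp add: powr_add power2_eq_square field_simps)

lemma mneg_lim:
  assumes a: "a < 0"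
  shows "(mneg a x0 \<longlongrightarrow> Lval a) at_top"
proof -
  have p: "2*H > 0" using H1 by simp
  have l1: "((\<lambda>t. (exp (a*t) * x0)\<^sup>2) \<longlongrightarrow> 0) at_top"
    using tendsto_power[OF tendsto_mult_left[OF lim_exp[OF a], of x0], of 2] by (simp add: mult.commute)
  have l2: "((\<lambda>t. (exp (a*t))\<^sup>2 * t powr (2*H)) \<longlongrightarrow> 0) at_top"
    using tendsto_mult[OF lim_exp[OF a] lim_exp_pow[OF a, of "2*H"]] by (simp add: power2_eq_square mult.assoc)
  have l3: "((\<lambda>t. a\<^sup>2 * Jt a t) \<longlongrightarrow> a\<^sup>2 * (Gamma (2*H+1) / (-a) powr (2*H+1) / (-2*a))) at_top"
    unfolding Jt_def by (intro tendsto_mult_left kJt_lim[OF a p])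
  have l4: "((\<lambda>t. 2 * exp (a*t) * (-a) * Kt a t) \<longlongrightarrow> 0) at_top"
  proof (rule tendsto_sandwich[where f="\<lambda>_. 0" and h="\<lambda>t. 2 * (-a) * (exp (a*t) * t powr (2*H+1))"])
    show "\<forall>\<^sub>F t in at_top. 0 \<le> 2 * exp (a*t) * (-a) * Kt a t"
      using eventually_ge_at_top[of 0]
    proof eventually_elim
      case (elim t)
      have "0 \<le> Kt a t" using Kt_bounds(1)[of t a] elim a by simp
      then show ?case using a by (intro mult_nonneg_nonneg) auto
    qed
    show "\<forall>\<^sub>F t in at_top. 2 * exp (a*t) * (-a) * Kt a t \<le> 2 * (-a) * (exp (a*t) * t powr (2*H+1))"
      using eventually_gt_at_top[of 0]
    proof eventually_elim
      case (elim t)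
      have "Kt a t \<le> t powr (2*H+1)" using Kt_bounds(2)[of t a] elim a by (simp add: powr_add)
      then have "exp (a*t) * Kt a t \<le> exp (a*t) * t powr (2*H+1)" by simp
      then show ?case using a by (simp add: mult.assoc mult.left_commute)
    qed
    show "((\<lambda>t. 2 * (-a) * (exp (a*t) * t powr (2*H+1))) \<longlongrightarrow> 0) at_top"
      using tendsto_mult_left[OF lim_exp_pow[OF a, of "2*H+1"], of "2*(-a)"] by simp
  qed simp
  have "((\<lambda>t. (exp (a*t) * x0)\<^sup>2 + (exp (a*t))\<^sup>2 * t powr (2*H) + a\<^sup>2 * Jt a t + 2 * exp (a*t) * (-a) * Kt a t)
        \<longlongrightarrow> 0 + 0 + a\<^sup>2 * (Gamma (2*H+1) / (-a) powr (2*H+1) / (-2*a)) + 0) at_top"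
    by (intro tendsto_add l1 l2 l3 l4)
  then show ?thesis unfolding mneg_def[abs_def] using Lval_eq[OF a] by simp
qed

lemma mneg_bound:
  assumes a: "a < 0" and t: "t \<ge> 0"
  shows "mneg a x0 t \<le> x0\<^sup>2 + t powr (2*H) + a\<^sup>2 * (Gamma (2*H+1) / (-a) powr (2*H+1) / (-2*a)) + 2 * (-a) * (t powr (2*H) * t)"
proof -
  have p: "2*H > 0" using H1 by simp
  have e: "0 < exp (a*t)" "exp (a*t) \<le> 1" using a t by (auto simp: mult_nonpos_nonneg)
  have e2: "(exp (a*t))\<^sup>2 \<le> 1" using e by (simp add: power_le_one)
  have "(exp (a*t) * x0)\<^sup>2 \<le> x0\<^sup>2" using e2 by (simp add: power_mult_distrib mult_left_le_one_le)
  moreover have "(exp (a*t))\<^sup>2 * t powr (2*H) \<le> t powr (2*H)" using e2 by (simp add: mult_left_le_one_le)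
  moreover have "a\<^sup>2 * Jt a t \<le> a\<^sup>2 * (Gamma (2*H+1) / (-a) powr (2*H+1) / (-2*a))"
    unfolding Jt_def by (intro mult_left_mono kJt_bound(2)[OF a p]) auto
  moreover have "2 * exp (a*t) * (-a) * Kt a t \<le> 2 * (-a) * (t powr (2*H) * t)"
  proof -
    have "exp (a*t) * Kt a t \<le> 1 * (t powr (2*H) * t)"
      by (rule mult_mono) (use e Kt_bounds[OF t, of a] a in auto)
    then show ?thesis using a by (simp add: mult.assoc mult.left_commute)
  qed
  ultimately show ?thesis unfolding mneg_def by linarith
qed

end




context RS
begin

lemma It_meas[measurable]: "It a t \<in> borel_measurable M"
  unfolding It_def FI_def by measurable

lemma lin_sol_meas: "t \<ge> 0 \<Longrightarrow> (\<lambda>\<omega>. lin_sol R x0 a t \<omega>) \<in> borel_measurable M"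
proof -
  assume t: "t \<ge> 0"
  have "(\<lambda>\<omega>. exp (a*t) * x0 + Rp t \<omega> + a * It a t \<omega>) \<in> borel_measurable M" by measurable
  then show ?thesis
    by (rule measurable_cong[THEN iffD1, rotated]) (simp add: lin_sol_I[OF _ t])
qed

lemma lin_sol_cont:
  assumes \<omega>: "\<omega> \<in> space M"
  shows "continuous_on {0..T} (\<lambda>t. lin_sol R x0 a t \<omega>)"
proof -
  define g where "g = (\<lambda>s. exp (-a * s) * R s \<omega>)"
  have gc: "continuous_on {0..T} g"
    unfolding g_def using continuous_on_subset[OF Rcont[OF \<omega>], of "{0..T}"]
    by (auto intro!: continuous_intros)
  have gi: "g integrable_on {0..T}" by (rule integrable_continuous_interval[OF gc])
  have ic: "continuous_on {0..T} (\<lambda>t. integral {0..t} g)" by (rule indefinite_integral_continuous_1[OF gi])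
  have eq: "lin_sol R x0 a t \<omega> = exp (a * t) * x0 + R t \<omega> + a * (exp (a * t) * integral {0..t} g)" for t
  proof -
    have "integral {0..t} (\<lambda>s. exp (a * (t - s)) * R s \<omega>) = integral {0..t} (\<lambda>s. exp (a * t) * g s)"
      by (rule integral_cong) (simp add: g_def exp_diff[symmetric] algebra_simps exp_add[symmetric])
    also have "\<dots> = exp (a * t) * integral {0..t} g" by simp
    finally show ?thesis unfolding lin_sol_def by simp
  qed
  have "continuous_on {0..T} (\<lambda>t. exp (a * t) * x0 + R t \<omega> + a * (exp (a * t) * integral {0..t} g))"
    using continuous_on_subset[OF Rcont[OF \<omega>], of "{0..T}"] ic
    by (auto intro!: continuous_intros)
  then show ?thesis unfolding eq .
qed

lemma lin_joint:
  assumes T: "T \<ge> 0"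
  shows "(\<lambda>(t,\<omega>). lin_sol R x0 a (min (max t 0) T) \<omega>) \<in> borel_measurable (lborel \<Otimes>\<^sub>M M)"
proof (rule joint_meas)
  fix t :: real
  show "(\<lambda>\<omega>. lin_sol R x0 a (min (max t 0) T) \<omega>) \<in> borel_measurable M"
    by (rule lin_sol_meas) (use T in auto)
next
  fix \<omega> assume \<omega>: "\<omega> \<in> space M"
  show "continuous_on UNIV (\<lambda>t. lin_sol R x0 a (min (max t 0) T) \<omega>)"
    by (rule continuous_on_compose2[OF lin_sol_cont[OF \<omega>, of T]]) (use T in \<open>auto intro!: continuous_intros\<close>)
qed

lemma cost_eq:
  assumes T: "T \<ge> 0" and q: "q \<ge> 0" and r: "r \<ge> 0"
  shows "(\<integral>\<^sup>+\<omega>. ennreal (integral {0..T} (\<lambda>t. q * (lin_sol R x0 a t \<omega>)\<^sup>2 + r * (K * lin_sol R x0 a t \<omega>)\<^sup>2)) \<partial>M)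
       = (\<integral>\<^sup>+t. ennreal (q + r * K\<^sup>2) * (\<integral>\<^sup>+\<omega>. ennreal ((lin_sol R x0 a t \<omega>)\<^sup>2) \<partial>M) * indicator {0..T} t \<partial>lborel)"
proof -
  interpret LM: pair_sigma_finite lborel M
    by (simp add: pair_sigma_finite_def sigma_finite_lborel sigma_finite_measure_axioms)
  define c where "c = q + r * K\<^sup>2"
  have c0: "c \<ge> 0" unfolding c_def using q r by simp
  have feq: "q * (x)\<^sup>2 + r * (K * x)\<^sup>2 = c * x\<^sup>2" for x :: real
    unfolding c_def by (simp add: power_mult_distrib algebra_simps)
  define G where "G = (\<lambda>t \<omega>. ennreal (c * (lin_sol R x0 a (min (max t 0) T) \<omega>)\<^sup>2) * indicator {0..T} t)"
  have Gm: "case_prod G \<in> borel_measurable (lborel \<Otimes>\<^sub>M M)"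
  proof -
    have "(\<lambda>z. ennreal (c * (case z of (t, \<omega>) \<Rightarrow> lin_sol R x0 a (min (max t 0) T) \<omega>)\<^sup>2) * indicator {0..T} (fst z))
        \<in> borel_measurable (lborel \<Otimes>\<^sub>M M)"
      using lin_joint[OF T, of x0 a] by measurable
    then show ?thesis unfolding G_def by (simp add: case_prod_beta')
  qed
  have step1: "ennreal (integral {0..T} (\<lambda>t. q * (lin_sol R x0 a t \<omega>)\<^sup>2 + r * (K * lin_sol R x0 a t \<omega>)\<^sup>2))
      = (\<integral>\<^sup>+t. G t \<omega> \<partial>lborel)" if \<omega>: "\<omega> \<in> space M" for \<omega>
  proof -
    have cont: "continuous_on {0..T} (\<lambda>t. c * (lin_sol R x0 a t \<omega>)\<^sup>2)"
      using lin_sol_cont[OF \<omega>, of T x0 a] by (auto intro!: continuous_intros)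
    have hi: "((\<lambda>t. c * (lin_sol R x0 a t \<omega>)\<^sup>2) has_integral integral {0..T} (\<lambda>t. c * (lin_sol R x0 a t \<omega>)\<^sup>2)) {0..T}"
      by (rule integrable_integral[OF integrable_continuous_interval[OF cont]])
    have "(\<integral>\<^sup>+t. ennreal (c * (lin_sol R x0 a t \<omega>)\<^sup>2) * indicator {0..T} t \<partial>lborel)
        = ennreal (integral {0..T} (\<lambda>t. c * (lin_sol R x0 a t \<omega>)\<^sup>2))"
      by (rule nn_integral_has_integral_lebesgue'[OF _ hi]) (use c0 in simp)
    moreover have "(\<integral>\<^sup>+t. G t \<omega> \<partial>lborel) = (\<integral>\<^sup>+t. ennreal (c * (lin_sol R x0 a t \<omega>)\<^sup>2) * indicator {0..T} t \<partial>lborel)"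
      unfolding G_def by (intro nn_integral_cong) (auto split: split_indicator)
    ultimately show ?thesis unfolding feq by simp
  qed
  have "(\<integral>\<^sup>+\<omega>. ennreal (integral {0..T} (\<lambda>t. q * (lin_sol R x0 a t \<omega>)\<^sup>2 + r * (K * lin_sol R x0 a t \<omega>)\<^sup>2)) \<partial>M)
      = (\<integral>\<^sup>+\<omega>. (\<integral>\<^sup>+t. G t \<omega> \<partial>lborel) \<partial>M)"
    by (rule nn_integral_cong) (simp add: step1)
  also have "\<dots> = (\<integral>\<^sup>+t. (\<integral>\<^sup>+\<omega>. G t \<omega> \<partial>M) \<partial>lborel)"
    by (rule LM.Fubini'[OF Gm])
  also have "\<dots> = (\<integral>\<^sup>+t. ennreal c * (\<integral>\<^sup>+\<omega>. ennreal ((lin_sol R x0 a t \<omega>)\<^sup>2) \<partial>M) * indicator {0..T} t \<partial>lborel)"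
  proof (rule nn_integral_cong)
    fix t :: real
    show "(\<integral>\<^sup>+\<omega>. G t \<omega> \<partial>M) = ennreal c * (\<integral>\<^sup>+\<omega>. ennreal ((lin_sol R x0 a t \<omega>)\<^sup>2) \<partial>M) * indicator {0..T} t"
    proof (cases "t \<in> {0..T}")
      case True
      then have mm: "min (max t 0) T = t" by auto
      have [measurable]: "(\<lambda>\<omega>. lin_sol R x0 a t \<omega>) \<in> borel_measurable M"
        using True by (intro lin_sol_meas) auto
      have "(\<integral>\<^sup>+\<omega>. G t \<omega> \<partial>M) = (\<integral>\<^sup>+\<omega>. ennreal c * ennreal ((lin_sol R x0 a t \<omega>)\<^sup>2) \<partial>M)"
        unfolding G_def mm using True c0 by (intro nn_integral_cong) (simp add: ennreal_mult)
      also have "\<dots> = ennreal c * (\<integral>\<^sup>+\<omega>. ennreal ((lin_sol R x0 a t \<omega>)\<^sup>2) \<partial>M)"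
        by (rule nn_integral_cmult) simp
      finally show ?thesis using True by simp
    qed (simp add: G_def)
  qed
  finally show ?thesis unfolding c_def .
qed


lemma Lval_pos: "a < 0 \<Longrightarrow> Lval a > 0"
  unfolding Lval_def using H1 by (intro divide_pos_pos Gamma_real_pos) auto

lemma mneg_nonneg: "a < 0 \<Longrightarrow> t \<ge> 0 \<Longrightarrow> mneg a x0 t \<ge> 0"
  using moment_neg(2)[of a t x0] by (metis integral_nonneg_AE AE_I2 zero_le_power2)

lemma cost_neg:
  assumes a: "b1 + b2 * K < 0" and q: "q > 0" and r: "r \<ge> 0"
  shows "lqr_cost M R b1 b2 x0 q r K = ennreal ((q + r * K\<^sup>2) * Lval (b1 + b2 * K))"
proof -
  define a where "a = b1 + b2 * K"
  define c where "c = q + r * K\<^sup>2"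
  have a0: "a < 0" using a unfolding a_def .
  have c0: "c > 0" unfolding c_def using q r by (simp add: add_pos_nonneg)
  have ev: "eventually (\<lambda>T. ennreal (1 / T) * (\<integral>\<^sup>+\<omega>. ennreal (integral {0..T} (\<lambda>t. q * (lin_sol R x0 a t \<omega>)\<^sup>2 + r * (K * lin_sol R x0 a t \<omega>)\<^sup>2)) \<partial>M)
      = ennreal (1/T) * (\<integral>\<^sup>+t. ennreal (c * mneg a x0 t) * indicator {0..T} t \<partial>lborel)) at_top"
    using eventually_ge_at_top[of 0]
  proof eventually_elim
    case (elim T)
    have "(\<integral>\<^sup>+\<omega>. ennreal (integral {0..T} (\<lambda>t. q * (lin_sol R x0 a t \<omega>)\<^sup>2 + r * (K * lin_sol R x0 a t \<omega>)\<^sup>2)) \<partial>M)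
        = (\<integral>\<^sup>+t. ennreal c * (\<integral>\<^sup>+\<omega>. ennreal ((lin_sol R x0 a t \<omega>)\<^sup>2) \<partial>M) * indicator {0..T} t \<partial>lborel)"
      unfolding c_def by (rule cost_eq[OF elim]) (use q r in auto)
    also have "\<dots> = (\<integral>\<^sup>+t. ennreal (c * mneg a x0 t) * indicator {0..T} t \<partial>lborel)"
    proof (rule nn_integral_cong)
      fix t :: real
      show "ennreal c * (\<integral>\<^sup>+\<omega>. ennreal ((lin_sol R x0 a t \<omega>)\<^sup>2) \<partial>M) * indicator {0..T} t = ennreal (c * mneg a x0 t) * indicator {0..T} t"
      proof (cases "t \<in> {0..T}")
        case True
        then show ?thesis using nn_moment_neg[OF a0, of t x0] c0 by (simp add: ennreal_mult')
      qed simp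
    qed
    finally show ?case by simp
  qed
  have lim: "((\<lambda>t. c * mneg a x0 t) \<longlongrightarrow> c * Lval a) at_top"
    by (intro tendsto_mult_left mneg_lim[OF a0])
  have L: "c * Lval a > 0" using c0 Lval_pos[OF a0] by simp
  have bnd: "\<exists>B. \<forall>t\<in>{0..T0}. c * mneg a x0 t \<le> B" for T0
  proof -
    define T1 where "T1 = max T0 0"
    have "\<forall>t\<in>{0..T0}. c * mneg a x0 t \<le> c * (x0\<^sup>2 + T1 powr (2*H) + a\<^sup>2 * (Gamma (2*H+1) / (-a) powr (2*H+1) / (-2*a)) + 2 * (-a) * (T1 powr (2*H) * T1))"
    proof
      fix t assume t: "t \<in> {0..T0}"
      have tT: "0 \<le> t" "t \<le> T1" using t unfolding T1_def by auto
      have p1: "t powr (2*H) \<le> T1 powr (2*H)" using tT H1 by (intro powr_mono2) auto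
      have p2: "t powr (2*H) * t \<le> T1 powr (2*H) * T1" using p1 tT by (intro mult_mono) auto
      have "mneg a x0 t \<le> x0\<^sup>2 + t powr (2*H) + a\<^sup>2 * (Gamma (2*H+1) / (-a) powr (2*H+1) / (-2*a)) + 2 * (-a) * (t powr (2*H) * t)"
        by (rule mneg_bound[OF a0 tT(1)])
      also have "\<dots> \<le> x0\<^sup>2 + T1 powr (2*H) + a\<^sup>2 * (Gamma (2*H+1) / (-a) powr (2*H+1) / (-2*a)) + 2 * (-a) * (T1 powr (2*H) * T1)"
        using p1 p2 a0 by (intro add_mono order_refl mult_left_mono) auto
      finally show "c * mneg a x0 t \<le> c * (x0\<^sup>2 + T1 powr (2*H) + a\<^sup>2 * (Gamma (2*H+1) / (-a) powr (2*H+1) / (-2*a)) + 2 * (-a) * (T1 powr (2*H) * T1))"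
        using c0 by (intro mult_left_mono) auto
    qed
    then show ?thesis by blast
  qed
  have "lqr_cost M R b1 b2 x0 q r K = Limsup at_top (\<lambda>T. ennreal (1/T) * (\<integral>\<^sup>+t. ennreal (c * mneg a x0 t) * indicator {0..T} t \<partial>lborel))"
    unfolding lqr_cost_def a_def[symmetric] by (rule Limsup_eq[OF ev])
  also have "\<dots> = ennreal (c * Lval a)" by (rule cesaro[OF lim L bnd])
  finally show ?thesis unfolding c_def a_def .
qed

lemma cost_nonneg:
  assumes a: "b1 + b2 * K \<ge> 0" and q: "q > 0" and r: "r \<ge> 0"
  shows "ennreal V \<le> lqr_cost M R b1 b2 x0 q r K"
proof -
  define a where "a = b1 + b2 * K"
  define c where "c = q + r * K\<^sup>2"
  have a0: "a \<ge> 0" using a unfolding a_def .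
  have cq: "c \<ge> q" unfolding c_def using r by simp
  have c0: "c > 0" using cq q by simp
  have ev: "eventually (\<lambda>T. ennreal V \<le> ennreal (1 / T) * (\<integral>\<^sup>+\<omega>. ennreal (integral {0..T} (\<lambda>t. q * (lin_sol R x0 a t \<omega>)\<^sup>2 + r * (K * lin_sol R x0 a t \<omega>)\<^sup>2)) \<partial>M)) at_top"
    using eventually_ge_at_top[of "max 2 (4 * \<bar>V\<bar> / q + 1)"]
  proof eventually_elim
    case (elim T)
    have T: "T \<ge> 2" "T \<ge> 4 * \<bar>V\<bar> / q + 1" using elim by auto
    have T0: "T \<ge> 0" using T by simp
    have "ennreal (c * (T/2)) * ennreal (T/2) = ennreal (c * (T/2)) * emeasure lborel {T/2..T}"
      using T by simp
    also have "\<dots> = (\<integral>\<^sup>+t. ennreal (c * (T/2)) * indicator {T/2..T} t \<partial>lborel)"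
      by (simp add: nn_integral_cmult_indicator)
    also have "\<dots> \<le> (\<integral>\<^sup>+t. ennreal c * (\<integral>\<^sup>+\<omega>. ennreal ((lin_sol R x0 a t \<omega>)\<^sup>2) \<partial>M) * indicator {0..T} t \<partial>lborel)"
    proof (rule nn_integral_mono)
      fix t :: real
      show "ennreal (c * (T/2)) * indicator {T/2..T} t \<le> ennreal c * (\<integral>\<^sup>+\<omega>. ennreal ((lin_sol R x0 a t \<omega>)\<^sup>2) \<partial>M) * indicator {0..T} t"
      proof (cases "t \<in> {T/2..T}")
        case True
        have t1: "t \<ge> 1" "t > 0" using True T by auto
        have "T/2 \<le> t" using True by simp
        also have "t = t powr 1" using t1 by simp
        also have "\<dots> \<le> t powr (2*H)" using t1 H1 by (intro powr_mono) auto
        finally have "ennreal (T/2) \<le> ennreal (t powr (2*H))" by (rule ennreal_leI)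
        also have "\<dots> \<le> (\<integral>\<^sup>+\<omega>. ennreal ((lin_sol R x0 a t \<omega>)\<^sup>2) \<partial>M)"
          by (rule nn_moment_nonneg[OF a0 t1(2)])
        finally have "ennreal c * ennreal (T/2) \<le> ennreal c * (\<integral>\<^sup>+\<omega>. ennreal ((lin_sol R x0 a t \<omega>)\<^sup>2) \<partial>M)"
          by (rule mult_left_mono) simp
        moreover have "ennreal (c * (T/2)) = ennreal c * ennreal (T/2)"
          by (rule ennreal_mult) (use c0 T in auto)
        ultimately show ?thesis using True by simp
      qed simp
    qed
    also have "\<dots> = (\<integral>\<^sup>+\<omega>. ennreal (integral {0..T} (\<lambda>t. q * (lin_sol R x0 a t \<omega>)\<^sup>2 + r * (K * lin_sol R x0 a t \<omega>)\<^sup>2)) \<partial>M)"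
      unfolding c_def by (rule cost_eq[OF T0, symmetric]) (use q r in auto)
    finally have I: "ennreal (c * (T/2)) * ennreal (T/2) \<le> (\<integral>\<^sup>+\<omega>. ennreal (integral {0..T} (\<lambda>t. q * (lin_sol R x0 a t \<omega>)\<^sup>2 + r * (K * lin_sol R x0 a t \<omega>)\<^sup>2)) \<partial>M)" .
    have "V \<le> c * T / 4"
    proof -
      have "4 * \<bar>V\<bar> / q \<le> T" using T by linarith
      then have "4 * \<bar>V\<bar> \<le> T * q" using q by (simp add: divide_le_eq)
      also have "\<dots> \<le> T * c" using cq T by (intro mult_left_mono) auto
      finally have "4 * \<bar>V\<bar> \<le> T * c" .
      moreover have "V \<le> \<bar>V\<bar>" by simp
      ultimately show ?thesis by (simp add: mult.commute)
    qed
    then have "ennreal V \<le> ennreal (c * T / 4)" by (rule ennreal_leI)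
    also have "\<dots> = ennreal (1/T) * (ennreal (c * (T/2)) * ennreal (T/2))"
      using T c0 by (simp add: ennreal_mult[symmetric])
    also have "\<dots> \<le> ennreal (1/T) * (\<integral>\<^sup>+\<omega>. ennreal (integral {0..T} (\<lambda>t. q * (lin_sol R x0 a t \<omega>)\<^sup>2 + r * (K * lin_sol R x0 a t \<omega>)\<^sup>2)) \<partial>M)"
      by (rule mult_left_mono[OF I]) simp
    finally show ?case .
  qed
  show ?thesis unfolding lqr_cost_def a_def[symmetric]
    by (rule le_Limsup[OF _ ev]) simp
qed

end




lemma phi_deriv:
  fixes A r b1 p s :: real
  assumes s: "s > 0"
  shows "((\<lambda>x. (A + r * (x + b1)\<^sup>2) / x powr p) has_real_derivative
          (2 * (r * (s + b1) * s - (p/2) * (A + r * (s + b1)\<^sup>2)) / (s * s powr p))) (at s)"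
proof -
  have d1: "((\<lambda>x. A + r * (x + b1)\<^sup>2) has_real_derivative 2 * r * (s + b1)) (at s)"
    by (auto intro!: derivative_eq_intros)
  have d2: "((\<lambda>x. x powr p) has_real_derivative p * s powr (p - 1)) (at s)"
    by (rule has_real_derivative_powr[OF s])
  have g0: "s powr p \<noteq> 0" using s by simp
  note D = DERIV_divide[OF d1 d2 g0]
  have pm: "s powr (p - 1) = s powr p / s" using s by (simp add: powr_diff)
  have "(2 * r * (s + b1) * s powr p - (A + r * (s + b1)\<^sup>2) * (p * s powr (p - 1))) / (s powr p * s powr p)
      = 2 * (r * (s + b1) * s - (p/2) * (A + r * (s + b1)\<^sup>2)) / (s * s powr p)"
    unfolding pm using s g0 by (simp add: field_simps)
  with D show ?thesis by simp
qed

lemma opt_main: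
  fixes H b1 b2 q r Khat :: real
  assumes H1: "1/2 < H" and H2: "H < 1" and b2: "b2 \<noteq> 0" and q: "q > 0" and r: "r > 0"
    and Khat_def: "Khat = - (b1 + sqrt (b1\<^sup>2 + 4 * H * (1 - H) * (b2\<^sup>2 * q / r))) / (2 * b2 * (1 - H))"
  shows "b1 + b2 * Khat < 0"
    and "-(r * Khat / b2) * (-(b1 + b2 * Khat)) = H * (q + r * Khat\<^sup>2)"
    and "\<And>K. b1 + b2 * K < 0 \<Longrightarrow> (q + r * Khat\<^sup>2) / (-(b1 + b2 * Khat)) powr (2*H) \<le> (q + r * K\<^sup>2) / (-(b1 + b2 * K)) powr (2*H)"
proof -
  define D where "D = b1\<^sup>2 + 4 * H * (1 - H) * (b2\<^sup>2 * q / r)"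
  define sq where "sq = sqrt D"
  define A where "A = q * b2\<^sup>2"
  have A0: "A > 0" unfolding A_def using q b2 by simp
  have h1: "1 - H > 0" "H > 0" using H1 H2 by auto
  have Dpos: "D > b1\<^sup>2" unfolding D_def using h1 q r b2 by (simp add: mult_pos_pos)
  have D0: "D \<ge> 0" using Dpos zero_le_power2[of b1] by linarith
  have sq2: "sq\<^sup>2 = D" unfolding sq_def using D0 by simp
  have sqb: "sq > \<bar>b1\<bar>"
    unfolding sq_def using real_sqrt_less_mono[OF Dpos] by simp
  define ss where "ss = (b1 * (2*H - 1) + sq) / (2 * (1 - H))"
  have Kh: "b2 * Khat = - (b1 + sq) / (2 * (1 - H))"
    unfolding Khat_def sq_def D_def using b2 h1 by (simp add: field_simps)
  have ssK: "b1 + b2 * Khat = - ss"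
    unfolding Kh ss_def using h1 by (simp add: field_simps)
  have ss0: "ss > 0"
  proof -
    have "\<bar>b1\<bar> * \<bar>2*H - 1\<bar> \<le> \<bar>b1\<bar>"
      by (rule mult_right_le_one_le) (use H1 H2 in auto)
    then have "\<bar>b1 * (2*H - 1)\<bar> \<le> \<bar>b1\<bar>" by (simp only: abs_mult)
    then have "b1 * (2*H - 1) + sq > 0" using sqb by linarith
    then show ?thesis unfolding ss_def using h1 by simp
  qed
  show "b1 + b2 * Khat < 0" using ssK ss0 by simp
  define P where "P = (\<lambda>s. r * (1 - H) * s\<^sup>2 + r * b1 * (1 - 2*H) * s - H * (A + r * b1\<^sup>2))"
  have Pss: "P ss = 0"
  proof -
    have ssw: "ss * (2*(1-H)) = b1*(2*H-1) + sq" unfolding ss_def using h1 by simp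
    have rD: "r * sq\<^sup>2 = r * b1\<^sup>2 + 4*H*(1-H)*A" unfolding sq2 D_def A_def using r by (simp add: field_simps)
    have "(2*(1-H))\<^sup>2 * P ss = 0" unfolding P_def using ssw rD by algebra
    then show ?thesis using h1 by simp
  qed
  have Kss: "Khat = - (ss + b1) / b2" using ssK b2 by (simp add: field_simps)
  have qK: "q + r * K\<^sup>2 = (A + r * (ss' + b1)\<^sup>2) / b2\<^sup>2" if "K = - (ss' + b1) / b2" for K ss'
    unfolding that A_def using b2 by (simp add: field_simps power2_eq_square)
  show "-(r * Khat / b2) * (-(b1 + b2 * Khat)) = H * (q + r * Khat\<^sup>2)"
  proof -
    have "-(r * Khat / b2) * (-(b1 + b2 * Khat)) = r * (ss + b1) * ss / b2\<^sup>2"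
      unfolding ssK Kss using b2 by (simp add: field_simps power2_eq_square)
    also have "\<dots> = H * ((A + r * (ss + b1)\<^sup>2) / b2\<^sup>2)"
      using Pss unfolding P_def using b2 by (simp add: field_simps power2_eq_square)
    also have "\<dots> = H * (q + r * Khat\<^sup>2)" using qK[OF Kss] by simp
    finally show ?thesis .
  qed
  define phi where "phi = (\<lambda>x. (A + r * (x + b1)\<^sup>2) / x powr (2*H))"
  define s2 where "s2 = - H * (A + r * b1\<^sup>2) / (r * (1 - H) * ss)"
  have s2n: "s2 < 0" unfolding s2_def using h1 r ss0 A0
    by (intro divide_neg_pos) (auto intro!: mult_pos_pos add_pos_nonneg)
  have Pfac: "P s = r * (1 - H) * (s - ss) * (s - s2)" for s
  proof -
    have "r * (1 - H) * ss + r * b1 * (1 - 2*H) + r * (1 - H) * s2 = 0"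
    proof -
      have "ss * (r * (1 - H) * ss + r * b1 * (1 - 2*H) + r * (1 - H) * s2) = P ss"
        unfolding P_def s2_def using h1 r ss0 by (simp add: field_simps power2_eq_square)
      then show ?thesis using Pss ss0 by simp
    qed
    then have e: "r * b1 * (1 - 2*H) = - r * (1 - H) * (ss + s2)" by (simp add: algebra_simps)
    have e2: "r * (1 - H) * ss * s2 = - H * (A + r * b1\<^sup>2)"
      unfolding s2_def using h1 r ss0 by (simp add: field_simps)
    show ?thesis unfolding P_def e using e2 by (simp add: algebra_simps power2_eq_square)
  qed
  have deriv: "(phi has_real_derivative (2 * P x / (x * x powr (2*H)))) (at x)" if "x > 0" for x
  proof -
    have "r * (x + b1) * x - (2*H/2) * (A + r * (x + b1)\<^sup>2) = P x"
      unfolding P_def by (simp add: algebra_simps power2_eq_square)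
    then show ?thesis using phi_deriv[OF that, of A r b1 "2*H"] unfolding phi_def by simp
  qed
  have cont: "continuous_on {a..b} phi" if "a > 0" for a b
  proof (rule DERIV_atLeastAtMost_imp_continuous_on)
    fix x assume "a \<le> x" "x \<le> b"
    then have "x > 0" using that by simp
    then show "\<exists>y. (phi has_real_derivative y) (at x)" using deriv by blast
  qed
  have minphi: "phi ss \<le> phi s" if s: "s > 0" for s
  proof (cases "s \<le> ss")
    case True
    show ?thesis
    proof (rule DERIV_nonpos_imp_decreasing_open[OF True])
      fix x assume x: "s < x" "x < ss"
      have f1: "r * (1 - H) * (x - ss) \<le> 0" using h1 r x by (intro mult_nonneg_nonpos) auto
      have f2: "0 \<le> x - s2" using x s s2n by linarith
      have "P x \<le> 0" unfolding Pfac using f1 f2 by (rule mult_nonpos_nonneg)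
      then have "2 * P x / (x * x powr (2*H)) \<le> 0" using x s
        by (intro divide_nonpos_nonneg) auto
      then show "\<exists>y. (phi has_real_derivative y) (at x) \<and> y \<le> 0" using deriv[of x] x s by auto
    qed (rule cont[OF s])
  next
    case False
    show ?thesis
    proof (rule DERIV_nonneg_imp_increasing_open[of ss s phi])
      show "ss \<le> s" using False by simp
      fix x assume x: "ss < x" "x < s"
      have f1: "r * (1 - H) * (x - ss) \<ge> 0" using h1 r x by (intro mult_nonneg_nonneg) auto
      have f2: "0 \<le> x - s2" using x ss0 s2n by linarith
      have "P x \<ge> 0" unfolding Pfac using f1 f2 by (rule mult_nonneg_nonneg)
      then have "2 * P x / (x * x powr (2*H)) \<ge> 0" using x ss0
        by (intro divide_nonneg_nonneg) auto
      then show "\<exists>y. (phi has_real_derivative y) (at x) \<and> y \<ge> 0" using deriv[of x] x ss0 by auto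
    qed (rule cont[OF ss0])
  qed
  show "(q + r * Khat\<^sup>2) / (-(b1 + b2 * Khat)) powr (2*H) \<le> (q + r * K\<^sup>2) / (-(b1 + b2 * K)) powr (2*H)"
    if K: "b1 + b2 * K < 0" for K
  proof -
    define s where "s = -(b1 + b2 * K)"
    have s0: "s > 0" using K unfolding s_def by simp
    have Ks: "K = - (s + b1) / b2" unfolding s_def using b2 by (simp add: field_simps)
    have "(q + r * Khat\<^sup>2) / (-(b1 + b2 * Khat)) powr (2*H) = phi ss / b2\<^sup>2"
      unfolding ssK qK[OF Kss] phi_def by simp
    also have "\<dots> \<le> phi s / b2\<^sup>2" using minphi[OF s0] by (simp add: divide_right_mono)
    also have "\<dots> = (q + r * K\<^sup>2) / (-(b1 + b2 * K)) powr (2*H)"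
      unfolding s_def[symmetric] qK[OF Ks] phi_def by simp
    finally show ?thesis .
  qed
qed


theorem mainTheorem1:
  fixes M :: "'a measure" and R :: "real \<Rightarrow> 'a \<Rightarrow> real"
    and H b1 b2 x0 q r :: real
  assumes H: "1/2 < H" "H < 1"
    and b2: "b2 \<noteq> 0" and q: "q > 0" and r: "r > 0"
    and R: "rosenblatt_like M H R"
  defines "Khat \<equiv> - (b1 + sqrt (b1\<^sup>2 + 4 * H * (1 - H) * (b2\<^sup>2 * q / r))) / (2 * b2 * (1 - H))"
  shows "(\<forall>K. lqr_cost M R b1 b2 x0 q r Khat \<le> lqr_cost M R b1 b2 x0 q r K)
    \<and> lqr_cost M R b1 b2 x0 q r Khat =
        ennreal (Gamma (2*H) / (- (b1 + b2 * Khat)) powr (2*H - 1) * (- (r * Khat / b2)))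
    \<and> Gamma (2*H) / (- (b1 + b2 * Khat)) powr (2*H - 1) * (- (r * Khat / b2)) =
        Gamma (2*H + 1) / (2 * (- (b1 + b2 * Khat)) powr (2*H)) * (q + r * Khat\<^sup>2)"
proof -
  interpret RS M H R by (rule rosen_RS[OF R H])
  have Kd: "Khat = - (b1 + sqrt (b1\<^sup>2 + 4 * H * (1 - H) * (b2\<^sup>2 * q / r))) / (2 * b2 * (1 - H))"
    unfolding Khat_def ..
  note O = opt_main[OF H(1) H(2) b2 q r Kd]
  define s where "s = - (b1 + b2 * Khat)"
  have s0: "s > 0" using O(1) unfolding s_def by simp
  have r0: "r \<ge> 0" using r by simp
  have G: "Gamma (2*H + 1) = 2*H * Gamma (2*H)"
  proof (rule Gamma_plus1)
    show "2*H \<notin> \<int>\<^sub>\<le>\<^sub>0" using H(1) nonpos_Ints_nonpos by fastforce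
  qed
  have Gp: "Gamma (2*H) > 0" using H(1) by (intro Gamma_real_pos) simp
  have stat: "- (r * Khat / b2) * s = H * (q + r * Khat\<^sup>2)" using O(2) unfolding s_def .
  have third: "Gamma (2*H) / s powr (2*H - 1) * (- (r * Khat / b2)) =
        Gamma (2*H + 1) / (2 * s powr (2*H)) * (q + r * Khat\<^sup>2)"
  proof -
    have sp: "s powr (2*H - 1) = s powr (2*H) / s" using s0 by (simp add: powr_diff)
    have "Gamma (2*H) / s powr (2*H - 1) * (- (r * Khat / b2)) = Gamma (2*H) * ((- (r * Khat / b2)) * s) / s powr (2*H)"
      unfolding sp using s0 by (simp add: field_simps)
    also have "\<dots> = Gamma (2*H) * (H * (q + r * Khat\<^sup>2)) / s powr (2*H)" unfolding stat ..
    also have "\<dots> = Gamma (2*H + 1) / (2 * s powr (2*H)) * (q + r * Khat\<^sup>2)"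
      unfolding G using s0 by (simp add: field_simps)
    finally show ?thesis .
  qed
  have costK: "lqr_cost M R b1 b2 x0 q r Khat = ennreal ((q + r * Khat\<^sup>2) * Lval (b1 + b2 * Khat))"
    by (rule cost_neg[OF O(1) q r0])
  have LvK: "(q + r * Khat\<^sup>2) * Lval (b1 + b2 * Khat) = Gamma (2*H + 1) / (2 * s powr (2*H)) * (q + r * Khat\<^sup>2)"
    unfolding Lval_def s_def by simp
  have all: "lqr_cost M R b1 b2 x0 q r Khat \<le> lqr_cost M R b1 b2 x0 q r K" for K
  proof (cases "b1 + b2 * K < 0")
    case True
    have "(q + r * Khat\<^sup>2) * Lval (b1 + b2 * Khat) \<le> (q + r * K\<^sup>2) * Lval (b1 + b2 * K)"
    proof -
      have "(q + r * Khat\<^sup>2) / (-(b1 + b2 * Khat)) powr (2*H) \<le> (q + r * K\<^sup>2) / (-(b1 + b2 * K)) powr (2*H)"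
        by (rule O(3)[OF True])
      then have "Gamma (2*H + 1) / 2 * ((q + r * Khat\<^sup>2) / (-(b1 + b2 * Khat)) powr (2*H))
          \<le> Gamma (2*H + 1) / 2 * ((q + r * K\<^sup>2) / (-(b1 + b2 * K)) powr (2*H))"
        using H(1) by (intro mult_left_mono) (auto intro!: divide_nonneg_pos less_imp_le[OF Gamma_real_pos])
      then show ?thesis unfolding Lval_def by (simp add: field_simps)
    qed
    then show ?thesis unfolding costK cost_neg[OF True q r0] by (rule ennreal_leI)
  next
    case False
    then show ?thesis unfolding costK by (intro cost_nonneg) (use q r0 in auto)
  qed
  show ?thesis
    using all costK LvK third unfolding s_def by simp
qed


end
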